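(* Let $V=\mathbb{C}^6$ with basis $e_0,\dots,e_5$. Every projective line $\ell\subset\mathbb{P}(\wedge^2 V)$ all of whose points have rank exactly four is $PGL_6$-equivalent either to the line $\ell_g$ spanned by $e_0\wedge e_2+e_1\wedge e_3$ and $e_0\wedge e_4+e_1\wedge e_5$, or to the line $\ell_s$ spanned by $e_0\wedge e_2+e_1\wedge e_3$ and $e_0\wedge e_4+e_1\wedge e_2$.
   Context: Elements of $\wedge^2\mathbb{C}^6$ are identified with skew-symmetric $6\times6$ matrices, and the rank of a tensor is the rank of the corresponding matrix (so rank $2$ means decomposable). $PGL_6$ acts naturally on $\mathbb{P}(\wedge^2\mathbb{C}^6)\simeq\mathbb{P}^{14}$. Work over $\mathbb{C}$. *)

theory Defs
  imports "HOL-Analysis.Analysis" "HOL-Library.Numeral_Type"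
begin

text \<open>Elements of wedge^2 C^6 as skew-symmetric 6x6 complex matrices, indexed by type 6 = {0..5}.\<close>

definition skew :: "complex^6^6 \<Rightarrow> bool" where
  "skew M \<longleftrightarrow> transpose M = - M"

definition wedge :: "6 \<Rightarrow> 6 \<Rightarrow> complex^6^6" where
  "wedge i j = (\<chi> a b. (if a = i \<and> b = j then 1 else 0) - (if a = j \<and> b = i then 1 else 0))"

definition lin2 :: "complex \<Rightarrow> complex^6^6 \<Rightarrow> complex \<Rightarrow> complex^6^6 \<Rightarrow> complex^6^6" where
  "lin2 a A b B = (\<chi> i j. a * A$i$j + b * B$i$j)"

text \<open>The (affine cone over the) projective line spanned by A and B: their complex linear span.\<close>
definition pline :: "complex^6^6 \<Rightarrow> complex^6^6 \<Rightarrow> (complex^6^6) set" where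
  "pline A B = {lin2 a A b B | a b. True}"

definition act :: "complex^6^6 \<Rightarrow> complex^6^6 \<Rightarrow> complex^6^6" where
  "act g M = g ** M ** transpose g"

end

theory Submission
  imports Defs
begin

lemma exhaust_6:
  fixes x :: 6
  shows "x = 0 \<or> x = 1 \<or> x = 2 \<or> x = 3 \<or> x = 4 \<or> x = 5"
proof (induct x)
  case (of_int z)
  then have "z = 0 \<or> z = 1 \<or> z = 2 \<or> z = 3 \<or> z = 4 \<or> z = 5" by fastforce
  then show ?case by auto
qed

lemma UNIV6: "(UNIV::6 set) = {0,1,2,3,4,5}"
  using exhaust_6 by auto

lemma sum6: "sum f (UNIV::6 set) = f 0 + f 1 + f 2 + f 3 + f 4 + f 5"
  unfolding UNIV6 by (simp add: add.assoc)

lemma forall6: "(\<forall>i::6. P i) \<longleftrightarrow> P 0 \<and> P 1 \<and> P 2 \<and> P 3 \<and> P 4 \<and> P 5"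
proof
  assume "P 0 \<and> P 1 \<and> P 2 \<and> P 3 \<and> P 4 \<and> P 5"
  then show "\<forall>i. P i"
  proof (intro allI)
    fix i :: 6
    assume h: "P 0 \<and> P 1 \<and> P 2 \<and> P 3 \<and> P 4 \<and> P 5"
    from exhaust_6[of i] h show "P i" by (elim disjE) simp_all
  qed
qed simp

lemma ex6: "(\<exists>i::6. P i) \<longleftrightarrow> P 0 \<or> P 1 \<or> P 2 \<or> P 3 \<or> P 4 \<or> P 5"
  using forall6[of "\<lambda>i. \<not> P i"] by blast

lemma mat6_eq: "(M::'a^6^6) = N \<longleftrightarrow> (\<forall>i j. M$i$j = N$i$j)"
  by (simp add: vec_eq_iff)

lemma act_entry: "act g M $ i $ j = (\<Sum>k\<in>UNIV. \<Sum>l\<in>UNIV. g$i$k * M$k$l * g$j$l)"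
proof -
  have "act g M $ i $ j = (\<Sum>l\<in>UNIV. (\<Sum>k\<in>UNIV. g$i$k * M$k$l) * g$j$l)"
    unfolding act_def matrix_matrix_mult_def transpose_def by (simp only: vec_lambda_beta)
  also have "\<dots> = (\<Sum>l\<in>UNIV. \<Sum>k\<in>UNIV. g$i$k * M$k$l * g$j$l)"
    by (simp only: sum_distrib_right)
  also have "\<dots> = (\<Sum>k\<in>UNIV. \<Sum>l\<in>UNIV. g$i$k * M$k$l * g$j$l)"
    by (rule sum.swap)
  finally show ?thesis .
qed

lemma act_comp: "act g (act h M) = act (g ** h) M"
  unfolding act_def by (simp add: matrix_mul_assoc matrix_transpose_mul)

lemma lin2_entry[simp]: "lin2 a A b B $ i $ j = a * A$i$j + b * B$i$j"
  by (simp add: lin2_def)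

lemma act_lin2: "act g (lin2 a A b B) = lin2 a (act g A) b (act g B)"
proof -
  have "act g (lin2 a A b B) $ i $ j = lin2 a (act g A) b (act g B) $ i $ j" for i j
  proof -
    have e: "\<And>k l. g$i$k * (a * A$k$l + b * B$k$l) * g$j$l = a * (g$i$k * A$k$l * g$j$l) + b * (g$i$k * B$k$l * g$j$l)"
      by (simp add: algebra_simps)
    show ?thesis unfolding act_entry lin2_entry e
      by (simp only: sum.distrib sum_distrib_left)
  qed
  then show ?thesis by (simp add: mat6_eq)
qed

lemma skew_iff: "skew M \<longleftrightarrow> (\<forall>i j. M$i$j = - M$j$i)"
  unfolding skew_def by (auto simp: vec_eq_iff transpose_def)

lemma skew_entry: "skew M \<Longrightarrow> M$i$j = - M$j$i"
  unfolding skew_iff by blast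

lemma skew_diag: "skew (M::complex^6^6) \<Longrightarrow> M$i$i = 0"
  using skew_entry[of M i i] by simp

lemma act_skew: "skew M \<Longrightarrow> skew (act g M)"
proof -
  assume s: "skew M"
  have "act g M $ i $ j = - act g M $ j $ i" for i j
  proof -
    have "act g M $ i $ j = (\<Sum>k\<in>UNIV. \<Sum>l\<in>UNIV. - (g$j$l * M$l$k * g$i$k))"
      unfolding act_entry
      by (intro sum.cong refl, subst skew_entry[OF s], simp)
    also have "\<dots> = - (\<Sum>l\<in>UNIV. \<Sum>k\<in>UNIV. g$j$l * M$l$k * g$i$k)"
      by (subst sum.swap) (simp add: sum_negf)
    finally show ?thesis unfolding act_entry .
  qed
  then show ?thesis unfolding skew_iff by blast
qed

definition addm :: "6 \<Rightarrow> 6 \<Rightarrow> complex \<Rightarrow> complex^6^6" where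
  "addm k i c = (\<chi> a b. (if a = b then 1 else 0) + (if a = k \<and> b = i then c else 0))"

definition scm :: "6 \<Rightarrow> complex \<Rightarrow> complex^6^6" where
  "scm i c = (\<chi> a b. if a = b then (if a = i then c else 1) else 0)"

definition permm :: "(6 \<Rightarrow> 6) \<Rightarrow> complex^6^6" where
  "permm p = (\<chi> a b. if b = p a then 1 else 0)"

lemma sum_addm: "(\<Sum>l\<in>UNIV. addm k i c $ b $ l * f l) = f b + (if b = k then c * f i else 0)"
proof -
  have "(\<Sum>l\<in>UNIV. addm k i c $ b $ l * f l) = (\<Sum>l\<in>UNIV. (if b = l then f l else 0) + (if b = k \<and> l = i then c * f l else 0))"
    unfolding addm_def by (intro sum.cong refl) (auto simp: distrib_right)
  also have "\<dots> = (\<Sum>l\<in>UNIV. (if b = l then f l else 0)) + (\<Sum>l\<in>UNIV. (if b = k \<and> l = i then c * f l else 0))"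
    by (rule sum.distrib)
  also have "(\<Sum>l\<in>UNIV. (if b = l then f l else 0)) = f b"
    by (simp add: sum.delta)
  also have "(\<Sum>l\<in>UNIV. (if b = k \<and> l = i then c * f l else 0)) = (if b = k then c * f i else 0)"
    by (cases "b = k") (simp_all add: sum.delta')
  finally show ?thesis .
qed

lemma act_addm: "act (addm k i c) M $ a $ b = M$a$b + (if a = k then c * M$i$b else 0) + (if b = k then c * M$a$i else 0) + (if a = k \<and> b = k then c * c * M$i$i else 0)"
proof -
  have "act (addm k i c) M $ a $ b = (\<Sum>p\<in>UNIV. addm k i c $ a $ p * (\<Sum>q\<in>UNIV. addm k i c $ b $ q * M$p$q))"
    unfolding act_entry sum_distrib_left by (intro sum.cong refl) (simp add: mult_ac)
  also have "\<dots> = (\<Sum>p\<in>UNIV. addm k i c $ a $ p * (M$p$b + (if b = k then c * M$p$i else 0)))"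
    by (simp only: sum_addm)
  also have "\<dots> = M$a$b + (if b = k then c * M$a$i else 0) + (if a = k then c * (M$i$b + (if b = k then c * M$i$i else 0)) else 0)"
    by (rule sum_addm)
  finally show ?thesis by (simp add: algebra_simps)
qed

lemma sum_mult_delta1: "(\<Sum>l\<in>(UNIV::6 set). f l * (if b = l then y else 0)) = (f b * y::complex)"
proof -
  have "(\<Sum>l\<in>(UNIV::6 set). f l * (if b = l then y else 0)) = (\<Sum>l\<in>(UNIV::6 set). (if b = l then f l * y else 0))"
    by (intro sum.cong refl) simp
  then show ?thesis by (simp add: sum.delta)
qed

lemma sum_mult_delta2: "(\<Sum>l\<in>(UNIV::6 set). f l * (if l = b then y else 0)) = (f b * y::complex)"
  using sum_mult_delta1[of f b y] by (simp add: eq_commute)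

lemma scm_entry: "scm i c $ a $ k = (if a = k then (if a = i then c else 1) else 0)"
  unfolding scm_def by simp

lemma act_scm: "act (scm i c) M $ a $ b = (if a = i then c else 1) * (if b = i then c else 1) * M$a$b"
proof -
  have "act (scm i c) M $ a $ b = (\<Sum>k\<in>UNIV. if a = k then (\<Sum>l\<in>UNIV. if b = l then (if a = i then c else 1) * M$k$l * (if b = i then c else 1) else 0) else 0)"
    unfolding act_entry scm_entry by (intro sum.cong refl) (auto simp: sum_mult_delta1 intro: sum.cong)
  also have "\<dots> = (if a = i then c else 1) * (if b = i then c else 1) * M$a$b"
    by (simp add: sum.delta)
  finally show ?thesis .
qed

lemma act_permm: "act (permm p) M $ a $ b = M $ (p a) $ (p b)"
proof -
  have "act (permm p) M $ a $ b = (\<Sum>k\<in>UNIV. if k = p a then (\<Sum>l\<in>UNIV. if l = p b then M$k$l else 0) else 0)"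
    unfolding act_entry permm_def by (intro sum.cong refl) (auto simp: sum_mult_delta2 intro: sum.cong)
  also have "\<dots> = M $ (p a) $ (p b)"
    by (simp add: sum.delta')
  finally show ?thesis .
qed

lemma invertible_addm: "k \<noteq> i \<Longrightarrow> invertible (addm k i c)"
  unfolding invertible_right_inverse
proof (intro exI)
  assume ki: "k \<noteq> i"
  have "(addm k i c ** addm k i (-c)) $ a $ b = mat 1 $ a $ b" for a b
    unfolding matrix_matrix_mult_def vec_lambda_beta sum_addm
    using ki by (auto simp: addm_def mat_def)
  then show "addm k i c ** addm k i (-c) = mat 1"
    unfolding mat6_eq by blast
qed

lemma sum_delta_mult: "(\<Sum>l\<in>(UNIV::6 set). (if a = l then y else 0) * f l) = (y * f a::complex)"
  using sum_mult_delta1[of f a y] by (simp add: mult.commute)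

lemma invertible_scm: "c \<noteq> 0 \<Longrightarrow> invertible (scm i c)"
  unfolding invertible_right_inverse
proof (intro exI)
  assume c: "c \<noteq> 0"
  have "(scm i c ** scm i (1/c)) $ a $ b = mat 1 $ a $ b" for a b
  proof -
    have "(scm i c ** scm i (1/c)) $ a $ b = (\<Sum>l\<in>UNIV. (if a = l then (if a = i then c else 1) else 0) * scm i (1/c) $ l $ b)"
      unfolding matrix_matrix_mult_def scm_entry by simp
    also have "\<dots> = (if a = i then c else 1) * scm i (1/c) $ a $ b"
      by (rule sum_delta_mult)
    also have "\<dots> = mat 1 $ a $ b"
      using c by (simp add: scm_entry mat_def)
    finally show ?thesis .
  qed
  then show "scm i c ** scm i (1/c) = mat 1"
    unfolding mat6_eq by blast
qed

lemma invertible_permm: "bij p \<Longrightarrow> invertible (permm p)"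
  unfolding invertible_right_inverse
proof (intro exI)
  assume p: "bij p"
  have "(permm p ** permm (inv p)) $ a $ b = mat 1 $ a $ b" for a b
  proof -
    have "(permm p ** permm (inv p)) $ a $ b = (\<Sum>l\<in>UNIV. if l = p a then (if b = inv p l then 1 else 0) else 0)"
      unfolding matrix_matrix_mult_def permm_def vec_lambda_beta by (intro sum.cong refl) simp
    also have "\<dots> = (if b = inv p (p a) then 1 else 0)"
      by (simp add: sum.delta')
    also have "\<dots> = mat 1 $ a $ b"
      using p by (simp add: mat_def bij_is_inj eq_commute)
    finally show ?thesis .
  qed
  then show "permm p ** permm (inv p) = mat 1"
    unfolding mat6_eq by blast
qed

lemma row_mult_left: "row i (g ** M) = (\<Sum>k\<in>UNIV. g$i$k *s row k M)"
  by (simp add: vec_eq_iff row_def matrix_matrix_mult_def sum_component)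

lemma rank_mult_left_le: "rank ((g::complex^6^6) ** M) \<le> rank (M::complex^6^6)"
proof -
  have "rows (g ** M) \<subseteq> vec.span (rows M)"
  proof
    fix x assume "x \<in> rows (g ** M)"
    then obtain i where x: "x = row i (g ** M)" by (auto simp: rows_def)
    have "(\<Sum>k\<in>UNIV. g$i$k *s row k M) \<in> vec.span (rows M)"
      by (intro vec.span_sum vec.span_scale vec.span_base) (auto simp: rows_def)
    then show "x \<in> vec.span (rows M)" by (simp add: x row_mult_left)
  qed
  then show ?thesis unfolding row_rank_def_gen by (rule vec.dim_mono)
qed

lemma row_mult_right: "row i ((M::complex^'n^'m) ** (h::complex^'p^'n)) = transpose h *v row i M"
  unfolding vec_eq_iff row_def matrix_matrix_mult_def matrix_vector_mult_def transpose_def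
  by (simp, intro allI sum.cong refl, simp add: mult.commute)

lemma rank_mult_right_le: "rank ((M::complex^6^6) ** (h::complex^6^6)) \<le> rank M"
proof -
  have "rows (M ** h) = (\<lambda>x. transpose h *v x) ` rows M"
    by (auto simp: rows_def row_mult_right)
  then show ?thesis unfolding row_rank_def_gen
    using vec.dim_image_le[OF matrix_vector_mul_linear_gen, of "transpose h" "rows M"] by simp
qed

lemma rank_act_le: "rank (act g (M::complex^6^6)) \<le> rank M"
  unfolding act_def
  using rank_mult_right_le[of "g ** M" "transpose g"] rank_mult_left_le[of g M] by linarith

lemma act_one: "act (mat 1) M = M"
  unfolding act_def by (simp add: transpose_mat)

lemma rank_act: "invertible g \<Longrightarrow> rank (act g (M::complex^6^6)) = rank M"
proof -
  assume "invertible g"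
  then obtain g' where g': "g' ** g = mat 1" unfolding invertible_left_inverse by blast
  have "M = act g' (act g M)" by (simp add: act_comp g' act_one)
  then have "rank M \<le> rank (act g M)" using rank_act_le[of g' "act g M"] by simp
  then show ?thesis using rank_act_le[of g M] by simp
qed

lemma rank_full: "(M::complex^6^6) ** Q = mat 1 \<Longrightarrow> rank M = 6"
proof -
  assume "M ** Q = mat 1"
  then have "Q ** M = mat 1" by (simp add: matrix_left_right_inverse)
  then have "vec.span (rows M) = UNIV" using matrix_left_invertible_span_rows_gen by blast
  then have "vec.dim (rows M) = vec.dim (UNIV :: (complex^6) set)"
    using vec.dim_span[of "rows M"] by simp
  then show ?thesis unfolding row_rank_def_gen by (simp add: vec_dim_card card_cart_basis)
qed

lemma rank_le2: "(\<And>k. row k (M::complex^6^6) \<in> vec.span {u, v}) \<Longrightarrow> rank M \<le> 2"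
proof -
  assume h: "\<And>k. row k M \<in> vec.span {u, v}"
  have "rows M \<subseteq> vec.span {u, v}" using h by (auto simp: rows_def)
  then have "vec.dim (rows M) \<le> card {u, v}" by (rule vec.dim_le_card) simp
  also have "\<dots> \<le> 2" by (simp add: card_insert_le_m1)
  finally show ?thesis unfolding row_rank_def_gen .
qed

lemma span2I: "x = a *s u + b *s v \<Longrightarrow> x \<in> vec.span {u, v}"
  by (simp add: vec.span_add vec.span_scale vec.span_base)

definition pf4 :: "complex^6^6 \<Rightarrow> 6 \<Rightarrow> 6 \<Rightarrow> 6 \<Rightarrow> 6 \<Rightarrow> complex" where
  "pf4 M a b c d = M$a$b*M$c$d - M$a$c*M$b$d + M$a$d*M$b$c"

definition pf6 :: "complex^6^6 \<Rightarrow> complex" where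
  "pf6 M = M$0$1 * pf4 M 2 3 4 5 - M$0$2 * pf4 M 1 3 4 5 + M$0$3 * pf4 M 1 2 4 5 - M$0$4 * pf4 M 1 2 3 5 + M$0$5 * pf4 M 1 2 3 4"

definition padj :: "complex^6^6 \<Rightarrow> complex^6^6" where
  "padj M = (\<chi> a b. if a = 0 \<and> b = 1 then - (M$2$3*M$4$5 - M$2$4*M$3$5 + M$2$5*M$3$4) else
    if a = 0 \<and> b = 2 then (M$1$3*M$4$5 - M$1$4*M$3$5 + M$1$5*M$3$4) else
    if a = 0 \<and> b = 3 then - (M$1$2*M$4$5 - M$1$4*M$2$5 + M$1$5*M$2$4) else
    if a = 0 \<and> b = 4 then (M$1$2*M$3$5 - M$1$3*M$2$5 + M$1$5*M$2$3) else
    if a = 0 \<and> b = 5 then - (M$1$2*M$3$4 - M$1$3*M$2$4 + M$1$4*M$2$3) else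
    if a = 1 \<and> b = 0 then (M$2$3*M$4$5 - M$2$4*M$3$5 + M$2$5*M$3$4) else
    if a = 1 \<and> b = 2 then - (M$0$3*M$4$5 - M$0$4*M$3$5 + M$0$5*M$3$4) else
    if a = 1 \<and> b = 3 then (M$0$2*M$4$5 - M$0$4*M$2$5 + M$0$5*M$2$4) else
    if a = 1 \<and> b = 4 then - (M$0$2*M$3$5 - M$0$3*M$2$5 + M$0$5*M$2$3) else
    if a = 1 \<and> b = 5 then (M$0$2*M$3$4 - M$0$3*M$2$4 + M$0$4*M$2$3) else
    if a = 2 \<and> b = 0 then - (M$1$3*M$4$5 - M$1$4*M$3$5 + M$1$5*M$3$4) else
    if a = 2 \<and> b = 1 then (M$0$3*M$4$5 - M$0$4*M$3$5 + M$0$5*M$3$4) else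
    if a = 2 \<and> b = 3 then - (M$0$1*M$4$5 - M$0$4*M$1$5 + M$0$5*M$1$4) else
    if a = 2 \<and> b = 4 then (M$0$1*M$3$5 - M$0$3*M$1$5 + M$0$5*M$1$3) else
    if a = 2 \<and> b = 5 then - (M$0$1*M$3$4 - M$0$3*M$1$4 + M$0$4*M$1$3) else
    if a = 3 \<and> b = 0 then (M$1$2*M$4$5 - M$1$4*M$2$5 + M$1$5*M$2$4) else
    if a = 3 \<and> b = 1 then - (M$0$2*M$4$5 - M$0$4*M$2$5 + M$0$5*M$2$4) else
    if a = 3 \<and> b = 2 then (M$0$1*M$4$5 - M$0$4*M$1$5 + M$0$5*M$1$4) else
    if a = 3 \<and> b = 4 then - (M$0$1*M$2$5 - M$0$2*M$1$5 + M$0$5*M$1$2) else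
    if a = 3 \<and> b = 5 then (M$0$1*M$2$4 - M$0$2*M$1$4 + M$0$4*M$1$2) else
    if a = 4 \<and> b = 0 then - (M$1$2*M$3$5 - M$1$3*M$2$5 + M$1$5*M$2$3) else
    if a = 4 \<and> b = 1 then (M$0$2*M$3$5 - M$0$3*M$2$5 + M$0$5*M$2$3) else
    if a = 4 \<and> b = 2 then - (M$0$1*M$3$5 - M$0$3*M$1$5 + M$0$5*M$1$3) else
    if a = 4 \<and> b = 3 then (M$0$1*M$2$5 - M$0$2*M$1$5 + M$0$5*M$1$2) else
    if a = 4 \<and> b = 5 then - (M$0$1*M$2$3 - M$0$2*M$1$3 + M$0$3*M$1$2) else
    if a = 5 \<and> b = 0 then (M$1$2*M$3$4 - M$1$3*M$2$4 + M$1$4*M$2$3) else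
    if a = 5 \<and> b = 1 then - (M$0$2*M$3$4 - M$0$3*M$2$4 + M$0$4*M$2$3) else
    if a = 5 \<and> b = 2 then (M$0$1*M$3$4 - M$0$3*M$1$4 + M$0$4*M$1$3) else
    if a = 5 \<and> b = 3 then - (M$0$1*M$2$4 - M$0$2*M$1$4 + M$0$4*M$1$2) else
    if a = 5 \<and> b = 4 then (M$0$1*M$2$3 - M$0$2*M$1$3 + M$0$3*M$1$2) else
    0)"

lemma skew_low:
  assumes "skew (M::complex^6^6)"
  shows "M$0$0 = 0" and "M$1$1 = 0" and "M$2$2 = 0" and "M$3$3 = 0" and "M$4$4 = 0" and "M$5$5 = 0" and "M$1$0 = - M$0$1" and "M$2$0 = - M$0$2" and "M$2$1 = - M$1$2" and "M$3$0 = - M$0$3" and "M$3$1 = - M$1$3" and "M$3$2 = - M$2$3" and "M$4$0 = - M$0$4" and "M$4$1 = - M$1$4" and "M$4$2 = - M$2$4" and "M$4$3 = - M$3$4" and "M$5$0 = - M$0$5" and "M$5$1 = - M$1$5" and "M$5$2 = - M$2$5" and "M$5$3 = - M$3$5" and "M$5$4 = - M$4$5"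
  by (rule skew_diag[OF assms] skew_entry[OF assms])+


lemma padj_prop:
  assumes "skew M"
  shows "(M ** padj M) $ i $ j = (if i = j then pf6 M else 0)"
proof -
  note sl = skew_low[OF assms]
  have "\<forall>i j. (M ** padj M) $ i $ j = (if i = j then pf6 M else 0)"
    unfolding forall6 matrix_matrix_mult_def vec_lambda_beta sum6
    by (simp add: padj_def pf6_def pf4_def sl algebra_simps)
  then show ?thesis by blast
qed

lemma rank_pf:
  assumes "skew M" and "pf6 M \<noteq> 0"
  shows "rank M = 6"
proof -
  have "M ** (\<chi> a b. padj M $ a $ b / pf6 M) = mat 1"
  proof -
    have "(M ** (\<chi> a b. padj M $ a $ b / pf6 M)) $ i $ j = mat 1 $ i $ j" for i j
    proof -
      have "(M ** (\<chi> a b. padj M $ a $ b / pf6 M)) $ i $ j = (M ** padj M) $ i $ j / pf6 M"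
        unfolding matrix_matrix_mult_def by (simp add: sum_divide_distrib)
      also have "\<dots> = mat 1 $ i $ j"
        using assms by (simp add: padj_prop mat_def)
      finally show ?thesis .
    qed
    then show ?thesis by (simp add: mat6_eq)
  qed
  then show ?thesis by (rule rank_full)
qed

lemma rank_le2_pair:
  assumes ij: "M$i$j \<noteq> 0"
    and id: "\<And>k l. M$i$j * M$k$l = M$i$k * M$j$l - M$i$l * M$j$k"
  shows "rank (M::complex^6^6) \<le> 2"
proof (rule rank_le2)
  fix k
  show "row k M \<in> vec.span {row j M, row i M}"
  proof (rule span2I)
    show "row k M = (M$i$k / M$i$j) *s row j M + (- M$j$k / M$i$j) *s row i M"
      unfolding vec_eq_iff
    proof
      fix l
      have e: "M$i$j * M$k$l = M$i$k * M$j$l - M$i$l * M$j$k" by (rule id)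
      have "row k M $ l = M$k$l" by (simp add: row_def)
      also have "\<dots> = (M$i$j * M$k$l) / M$i$j" using ij by simp
      also have "\<dots> = (M$i$k * M$j$l - M$i$l * M$j$k) / M$i$j" by (simp only: e)
      also have "\<dots> = ((M$i$k / M$i$j) *s row j M + (- M$j$k / M$i$j) *s row i M) $ l"
        by (simp add: row_def diff_divide_distrib mult.commute)
      finally show "row k M $ l = ((M$i$k / M$i$j) *s row j M + (- M$j$k / M$i$j) *s row i M) $ l" .
    qed
  qed
qed

lemma rank_le2_U:
  assumes sk: "skew M"
    and z: "\<And>k. M$k$4 = 0" "\<And>k. M$k$5 = 0"
    and pf: "pf4 M 0 1 2 3 = 0"
  shows "rank (M::complex^6^6) \<le> 2"
proof -
  note sl = skew_low[OF sk]
  have z4: "\<And>k. M$4$k = 0" using z(1) skew_entry[OF sk] by (metis neg_0_equal_iff_equal)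
  have z5: "\<And>k. M$5$k = 0" using z(2) skew_entry[OF sk] by (metis neg_0_equal_iff_equal)
  have p: "M$0$1*M$2$3 - M$0$2*M$1$3 + M$0$3*M$1$2 = 0" using pf by (simp add: pf4_def)
  show ?thesis
  proof (cases "M$0$1 \<noteq> 0")
    case True
    have "\<forall>k l. M$0$1 * M$k$l = M$0$k * M$1$l - M$0$l * M$1$k"
      unfolding forall6 using p by (simp add: sl z z4 z5; algebra)
    then show ?thesis using rank_le2_pair[OF True] by blast
  next
    case f1: False
    show ?thesis
    proof (cases "M$0$2 \<noteq> 0")
      case True
      have "\<forall>k l. M$0$2 * M$k$l = M$0$k * M$2$l - M$0$l * M$2$k"
        unfolding forall6 using p f1 by (simp add: sl z z4 z5; algebra)
      then show ?thesis using rank_le2_pair[OF True] by blast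
    next
      case f2: False
      show ?thesis
      proof (cases "M$0$3 \<noteq> 0")
        case True
        have "\<forall>k l. M$0$3 * M$k$l = M$0$k * M$3$l - M$0$l * M$3$k"
          unfolding forall6 using p f1 f2 by (simp add: sl z z4 z5; algebra)
        then show ?thesis using rank_le2_pair[OF True] by blast
      next
        case f3: False
        show ?thesis
        proof (cases "M$1$2 \<noteq> 0")
          case True
          have "\<forall>k l. M$1$2 * M$k$l = M$1$k * M$2$l - M$1$l * M$2$k"
            unfolding forall6 using p f1 f2 f3 by (simp add: sl z z4 z5; algebra)
          then show ?thesis using rank_le2_pair[OF True] by blast
        next
          case f4: False
          show ?thesis
          proof (cases "M$1$3 \<noteq> 0")
            case True
            have "\<forall>k l. M$1$3 * M$k$l = M$1$k * M$3$l - M$1$l * M$3$k"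
              unfolding forall6 using p f1 f2 f3 f4 by (simp add: sl z z4 z5; algebra)
            then show ?thesis using rank_le2_pair[OF True] by blast
          next
            case f5: False
            show ?thesis
            proof (cases "M$2$3 \<noteq> 0")
              case True
              have "\<forall>k l. M$2$3 * M$k$l = M$2$k * M$3$l - M$2$l * M$3$k"
                unfolding forall6 using p f1 f2 f3 f4 f5 by (simp add: sl z z4 z5; algebra)
              then show ?thesis using rank_le2_pair[OF True] by blast
            next
              case f6: False
              have "\<forall>k. row k M = 0"
                unfolding vec_eq_iff row_def forall6 using f1 f2 f3 f4 f5 f6
                by (simp add: sl z z4 z5)
              then have "\<And>k. row k M \<in> vec.span {0, 0}" by (simp add: vec.span_zero)
              then show ?thesis by (rule rank_le2)
            qed
          qed
        qed
      qed
    qed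
  qed
qed

definition A0 :: "complex^6^6" where "A0 = wedge 0 1 + wedge 2 3"
definition T1 :: "complex^6^6" where "T1 = wedge 0 2 + wedge 1 3"
definition Tg :: "complex^6^6" where "Tg = wedge 0 4 + wedge 1 5"
definition Ts :: "complex^6^6" where "Ts = wedge 0 4 + wedge 1 2"

definition CR :: "complex^6^6 \<Rightarrow> complex^6^6 \<Rightarrow> bool" where
  "CR A B \<longleftrightarrow> skew A \<and> skew B \<and> (\<forall>a b. lin2 a A b B = 0 \<longrightarrow> a = 0 \<and> b = 0)
     \<and> (\<forall>a b. (a, b) \<noteq> (0, 0) \<longrightarrow> rank (lin2 a A b B) = 4)"

definition GoalP :: "complex^6^6 \<Rightarrow> complex^6^6 \<Rightarrow> bool" where
  "GoalP A B \<longleftrightarrow> (\<exists>g :: complex^6^6. invertible g \<and>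
    (act g ` pline A B = pline T1 Tg \<or> act g ` pline A B = pline T1 Ts))"

lemma act_pline: "act g ` pline A B = pline (act g A) (act g B)"
proof
  show "act g ` pline A B \<subseteq> pline (act g A) (act g B)"
    unfolding pline_def using act_lin2 by blast
  show "pline (act g A) (act g B) \<subseteq> act g ` pline A B"
  proof
    fix x assume "x \<in> pline (act g A) (act g B)"
    then obtain a b where x: "x = lin2 a (act g A) b (act g B)" unfolding pline_def by blast
    have "lin2 a A b B \<in> pline A B" unfolding pline_def by blast
    then show "x \<in> act g ` pline A B" unfolding x act_lin2[symmetric] by blast
  qed
qed

lemma act_zero: "act g 0 = 0"
  unfolding act_def by simp

lemma act_inj0: "invertible g \<Longrightarrow> act g M = 0 \<Longrightarrow> M = 0"
proof -
  assume "invertible g" "act g M = 0"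
  then obtain g' where g': "g' ** g = mat 1" unfolding invertible_left_inverse by blast
  have "M = act g' (act g M)" by (simp add: act_comp g' act_one)
  then show "M = 0" using \<open>act g M = 0\<close> by (simp add: act_zero)
qed

lemma skew_lin2: "skew A \<Longrightarrow> skew B \<Longrightarrow> skew (lin2 a A b B)"
proof -
  assume a: "skew A" and b: "skew B"
  show ?thesis unfolding skew_iff lin2_entry
  proof (intro allI)
    fix i j
    show "a * A$i$j + b * B$i$j = - (a * A$j$i + b * B$j$i)"
      by (subst skew_entry[OF a], subst skew_entry[OF b], simp)
  qed
qed

lemma CR_act: "invertible h \<Longrightarrow> CR A B \<Longrightarrow> CR (act h A) (act h B)"
proof -
  assume h: "invertible h" and cr: "CR A B"
  have 1: "skew (act h A)" "skew (act h B)" using cr act_skew unfolding CR_def by auto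
  have 2: "\<forall>a b. lin2 a (act h A) b (act h B) = 0 \<longrightarrow> a = 0 \<and> b = 0"
  proof (intro allI impI)
    fix a b assume "lin2 a (act h A) b (act h B) = 0"
    then have "lin2 a A b B = 0" using act_inj0[OF h] by (simp add: act_lin2[symmetric])
    then show "a = 0 \<and> b = 0" using cr unfolding CR_def by blast
  qed
  have 3: "\<forall>a b. (a, b) \<noteq> (0, 0) \<longrightarrow> rank (lin2 a (act h A) b (act h B)) = 4"
    using cr unfolding CR_def by (simp add: act_lin2[symmetric] rank_act[OF h])
  show ?thesis using 1 2 3 unfolding CR_def by blast
qed

lemma GoalP_act: "invertible h \<Longrightarrow> GoalP (act h A) (act h B) \<Longrightarrow> GoalP A B"
proof -
  assume h: "invertible h" and "GoalP (act h A) (act h B)"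
  then obtain g where g: "invertible g" "act g ` pline (act h A) (act h B) = pline T1 Tg \<or> act g ` pline (act h A) (act h B) = pline T1 Ts"
    unfolding GoalP_def by blast
  have "act g ` pline (act h A) (act h B) = act (g ** h) ` pline A B"
    by (simp add: act_pline[symmetric] image_image act_comp)
  moreover have "invertible (g ** h)" using g(1) h by (rule invertible_mult)
  ultimately show ?thesis unfolding GoalP_def using g(2) by auto
qed

lemma lin2_change: "lin2 a A b (lin2 c A 1 B) = lin2 (a + b * c) A b B"
  by (simp add: mat6_eq algebra_simps)

lemma pline_change: "pline A (lin2 c A 1 B) = pline A B"
proof
  show "pline A (lin2 c A 1 B) \<subseteq> pline A B"
    unfolding pline_def lin2_change by blast
  show "pline A B \<subseteq> pline A (lin2 c A 1 B)"
  proof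
    fix x assume "x \<in> pline A B"
    then obtain a b where x: "x = lin2 a A b B" unfolding pline_def by blast
    have "x = lin2 (a - b * c) A b (lin2 c A 1 B)" unfolding lin2_change x by simp
    then show "x \<in> pline A (lin2 c A 1 B)" unfolding pline_def by blast
  qed
qed

lemma CR_change: "CR A B \<Longrightarrow> CR A (lin2 c A 1 B)"
proof -
  assume cr: "CR A B"
  have 1: "skew A" "skew (lin2 c A 1 B)" using cr skew_lin2 unfolding CR_def by auto
  have 2: "\<forall>a b. lin2 a A b (lin2 c A 1 B) = 0 \<longrightarrow> a = 0 \<and> b = 0"
  proof (intro allI impI)
    fix a b assume "lin2 a A b (lin2 c A 1 B) = 0"
    then have "a + b * c = 0 \<and> b = 0" using cr unfolding CR_def lin2_change by blast
    then show "a = 0 \<and> b = 0" by auto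
  qed
  have 3: "\<forall>a b. (a, b) \<noteq> (0, 0) \<longrightarrow> rank (lin2 a A b (lin2 c A 1 B)) = 4"
  proof (intro allI impI)
    fix a b :: complex assume "(a, b) \<noteq> (0, 0)"
    then have "(a + b * c, b) \<noteq> (0, 0)" by auto
    then show "rank (lin2 a A b (lin2 c A 1 B)) = 4" using cr unfolding CR_def lin2_change by blast
  qed
  show ?thesis using 1 2 3 unfolding CR_def by blast
qed

lemma GoalP_change: "GoalP A (lin2 c A 1 B) \<Longrightarrow> GoalP A B"
  unfolding GoalP_def pline_change .

lemma CR_pf: "CR A B \<Longrightarrow> (s, t) \<noteq> (0, 0) \<Longrightarrow> pf6 (lin2 s A t B) = 0"
proof -
  assume cr: "CR A B" and st: "(s, t) \<noteq> (0, 0)"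
  have "rank (lin2 s A t B) = 4" using cr st unfolding CR_def by blast
  moreover have "skew (lin2 s A t B)" using cr skew_lin2 unfolding CR_def by blast
  ultimately show ?thesis using rank_pf by fastforce
qed

lemma CR_rank: "CR A B \<Longrightarrow> (s, t) \<noteq> (0, 0) \<Longrightarrow> rank (lin2 s A t B) = 4"
  unfolding CR_def by blast

lemma CR_skewA: "CR A B \<Longrightarrow> skew A"
  unfolding CR_def by blast

lemma CR_skewB: "CR A B \<Longrightarrow> skew B"
  unfolding CR_def by blast

lemma lin2_01: "lin2 0 A 1 B = B"
  by (simp add: mat6_eq)

lemma lin2_10: "lin2 1 A 0 B = A"
  by (simp add: mat6_eq)

definition sw :: "6 \<Rightarrow> 6 \<Rightarrow> 6 \<Rightarrow> 6" where
  "sw i j x = (if x = i then j else if x = j then i else x)"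

lemma sw_bij: "bij (sw i j)"
proof -
  have "sw i j \<circ> sw i j = id" by (auto simp: sw_def fun_eq_iff)
  then show ?thesis using o_bij by blast
qed

lemma A0_entry: "A0 $ a $ b = (if a = 0 \<and> b = 1 then 1 else if a = 1 \<and> b = 0 then -1 else
   if a = 2 \<and> b = 3 then 1 else if a = 3 \<and> b = 2 then -1 else 0)"
  by (auto simp: A0_def wedge_def)

lemma wedge_entry: "wedge i j $ a $ b = (if a = i \<and> b = j then 1 else 0) - (if a = j \<and> b = i then 1 else 0)"
  by (simp add: wedge_def)

lemma stepB: "invertible h \<Longrightarrow> act h A0 = A0 \<Longrightarrow> CR A0 B \<Longrightarrow>
   (CR A0 (act h B) \<Longrightarrow> GoalP A0 (act h B)) \<Longrightarrow> GoalP A0 B"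
  using CR_act[of h A0 B] GoalP_act[of h A0 B] by simp

lemma final_g: "GoalP A0 (wedge 0 4 + wedge 2 5)"
proof -
  have "act (permm (sw 1 2)) A0 = T1"
    unfolding mat6_eq forall6 act_permm by (simp add: A0_entry T1_def wedge_entry sw_def)
  moreover have "act (permm (sw 1 2)) (wedge 0 4 + wedge 2 5) = Tg"
    unfolding mat6_eq forall6 act_permm by (simp add: Tg_def wedge_entry sw_def)
  ultimately show ?thesis unfolding GoalP_def act_pline
    using invertible_permm[OF sw_bij] by metis
qed

lemma final_s: "GoalP A0 (wedge 0 4 + wedge 2 1)"
proof -
  have "act (permm (sw 1 2)) A0 = T1"
    unfolding mat6_eq forall6 act_permm by (simp add: A0_entry T1_def wedge_entry sw_def)
  moreover have "act (permm (sw 1 2)) (wedge 0 4 + wedge 2 1) = Ts"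
    unfolding mat6_eq forall6 act_permm by (simp add: Ts_def wedge_entry sw_def)
  ultimately show ?thesis unfolding GoalP_def act_pline
    using invertible_permm[OF sw_bij] by metis
qed

lemma D3:
  assumes cr: "CR A0 B"
    and h: "B$0$1 = 0" "B$0$2 = 0" "B$0$3 = 0" "B$0$4 = 1" "B$0$5 = 0"
      "B$1$2 = 0" "B$1$4 = 0" "B$1$5 = 0" "B$2$3 = 0" "B$2$4 = 0" "B$2$5 = 1"
      "B$3$4 = 0" "B$3$5 = 0" "B$4$5 = 0"
  shows "GoalP A0 B"
proof -
  have sk: "skew B" using CR_skewB[OF cr] .
  note sl = skew_low[OF sk]
  have "pf6 (lin2 0 A0 1 B) = 0" using CR_pf[OF cr, of 0 1] by simp
  then have "pf6 B = 0" by (simp add: lin2_01)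
  then have b13: "B$1$3 = 0" by (simp add: pf6_def pf4_def sl h)
  have "B = wedge 0 4 + wedge 2 5"
    unfolding mat6_eq forall6 by (simp add: sl h b13 wedge_entry)
  then show ?thesis using final_g by simp
qed

lemma D2_5:
  assumes cr: "CR A0 B"
    and h: "B$0$4 = 1" "B$2$5 = 1" "B$1$4 = 0" "B$2$4 = 0" "B$3$4 = 0" "B$0$5 = 0" "B$1$5 = 0" "B$3$5 = 0" "B$4$5 = 0" "B$0$1 = 0" "B$0$2 = 0" "B$0$3 = 0" "B$1$2 = 0"
  shows "GoalP A0 B"
proof -
  have sk: "skew B" using CR_skewB[OF cr] .
  note sl = skew_low[OF sk]
  show ?thesis
  proof (rule stepB[OF _ _ cr])
    show "invertible (addm 3 5 (- B$2$3))" by (simp add: invertible_addm)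
    show "act (addm 3 5 (- B$2$3)) A0 = A0"
      unfolding mat6_eq forall6 by (simp add: act_comp[symmetric] act_addm act_scm act_permm A0_entry sw_def)
  next
    assume cr': "CR A0 (act (addm 3 5 (- B$2$3)) B)"
    show "GoalP A0 (act (addm 3 5 (- B$2$3)) B)"
      by (rule D3[OF cr' ]) (simp_all add: act_comp[symmetric] act_addm act_scm act_permm sl h sw_def )
  qed
qed
lemma D2_4:
  assumes cr: "CR A0 B"
    and h: "B$0$4 = 1" "B$2$5 = 1" "B$1$4 = 0" "B$2$4 = 0" "B$3$4 = 0" "B$0$5 = 0" "B$1$5 = 0" "B$3$5 = 0" "B$4$5 = 0" "B$0$1 = 0" "B$0$2 = 0" "B$0$3 = 0"
  shows "GoalP A0 B"
proof -
  have sk: "skew B" using CR_skewB[OF cr] .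
  note sl = skew_low[OF sk]
  show ?thesis
  proof (rule stepB[OF _ _ cr])
    show "invertible (addm 1 5 (B$1$2))" by (simp add: invertible_addm)
    show "act (addm 1 5 (B$1$2)) A0 = A0"
      unfolding mat6_eq forall6 by (simp add: act_comp[symmetric] act_addm act_scm act_permm A0_entry sw_def)
  next
    assume cr': "CR A0 (act (addm 1 5 (B$1$2)) B)"
    show "GoalP A0 (act (addm 1 5 (B$1$2)) B)"
      by (rule D2_5[OF cr' ]) (simp_all add: act_comp[symmetric] act_addm act_scm act_permm sl h sw_def )
  qed
qed
lemma D2_3:
  assumes cr: "CR A0 B"
    and h: "B$0$4 = 1" "B$2$5 = 1" "B$1$4 = 0" "B$2$4 = 0" "B$3$4 = 0" "B$0$5 = 0" "B$1$5 = 0" "B$3$5 = 0" "B$4$5 = 0" "B$0$1 = 0" "B$0$2 = 0"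
  shows "GoalP A0 B"
proof -
  have sk: "skew B" using CR_skewB[OF cr] .
  note sl = skew_low[OF sk]
  show ?thesis
  proof (rule stepB[OF _ _ cr])
    show "invertible (addm 3 4 (- B$0$3))" by (simp add: invertible_addm)
    show "act (addm 3 4 (- B$0$3)) A0 = A0"
      unfolding mat6_eq forall6 by (simp add: act_comp[symmetric] act_addm act_scm act_permm A0_entry sw_def)
  next
    assume cr': "CR A0 (act (addm 3 4 (- B$0$3)) B)"
    show "GoalP A0 (act (addm 3 4 (- B$0$3)) B)"
      by (rule D2_4[OF cr' ]) (simp_all add: act_comp[symmetric] act_addm act_scm act_permm sl h sw_def )
  qed
qed
lemma D2_2:
  assumes cr: "CR A0 B"
    and h: "B$0$4 = 1" "B$2$5 = 1" "B$1$4 = 0" "B$2$4 = 0" "B$3$4 = 0" "B$0$5 = 0" "B$1$5 = 0" "B$3$5 = 0" "B$4$5 = 0" "B$0$1 = 0"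
  shows "GoalP A0 B"
proof -
  have sk: "skew B" using CR_skewB[OF cr] .
  note sl = skew_low[OF sk]
  show ?thesis
  proof (rule stepB[OF _ _ cr])
    show "invertible (addm 2 4 (- B$0$2))" by (simp add: invertible_addm)
    show "act (addm 2 4 (- B$0$2)) A0 = A0"
      unfolding mat6_eq forall6 by (simp add: act_comp[symmetric] act_addm act_scm act_permm A0_entry sw_def)
  next
    assume cr': "CR A0 (act (addm 2 4 (- B$0$2)) B)"
    show "GoalP A0 (act (addm 2 4 (- B$0$2)) B)"
      by (rule D2_3[OF cr' ]) (simp_all add: act_comp[symmetric] act_addm act_scm act_permm sl h sw_def )
  qed
qed
lemma D2_1:
  assumes cr: "CR A0 B"
    and h: "B$0$4 = 1" "B$2$5 = 1" "B$1$4 = 0" "B$2$4 = 0" "B$3$4 = 0" "B$0$5 = 0" "B$1$5 = 0" "B$3$5 = 0" "B$4$5 = 0"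
  shows "GoalP A0 B"
proof -
  have sk: "skew B" using CR_skewB[OF cr] .
  note sl = skew_low[OF sk]
  show ?thesis
  proof (rule stepB[OF _ _ cr])
    show "invertible (addm 1 4 (- B$0$1))" by (simp add: invertible_addm)
    show "act (addm 1 4 (- B$0$1)) A0 = A0"
      unfolding mat6_eq forall6 by (simp add: act_comp[symmetric] act_addm act_scm act_permm A0_entry sw_def)
  next
    assume cr': "CR A0 (act (addm 1 4 (- B$0$1)) B)"
    show "GoalP A0 (act (addm 1 4 (- B$0$1)) B)"
      by (rule D2_2[OF cr' ]) (simp_all add: act_comp[symmetric] act_addm act_scm act_permm sl h sw_def )
  qed
qed

lemma D1c:
  assumes cr: "CR A0 B"
    and h: "B$0$4 = 1" "B$1$4 = 0" "B$2$4 = 0" "B$3$4 = 0" "B$0$5 = 0" "B$1$5 = 0" "B$4$5 = 0" "B$2$5 = 1"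
  shows "GoalP A0 B"
proof -
  have sk: "skew B" using CR_skewB[OF cr] .
  note sl = skew_low[OF sk]
  show ?thesis
  proof (rule stepB[OF _ _ cr])
    show "invertible (addm 3 2 (- B$3$5))" by (simp add: invertible_addm)
    show "act (addm 3 2 (- B$3$5)) A0 = A0"
      unfolding mat6_eq forall6 using h by (simp add: act_comp[symmetric] act_addm act_scm act_permm A0_entry sw_def)
  next
    assume cr': "CR A0 (act (addm 3 2 (- B$3$5)) B)"
    show "GoalP A0 (act (addm 3 2 (- B$3$5)) B)"
      by (rule D2_1[OF cr' ]) (simp_all add: act_comp[symmetric] act_addm act_scm act_permm sl h sw_def )
  qed
qed
lemma D1b:
  assumes cr: "CR A0 B"
    and h: "B$0$4 = 1" "B$1$4 = 0" "B$2$4 = 0" "B$3$4 = 0" "B$0$5 = 0" "B$1$5 = 0" "B$4$5 = 0" "B$2$5 \<noteq> 0"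
  shows "GoalP A0 B"
proof -
  have sk: "skew B" using CR_skewB[OF cr] .
  note sl = skew_low[OF sk]
  show ?thesis
  proof (rule stepB[OF _ _ cr])
    show "invertible (scm 3 (B$2$5) ** scm 2 (1 / B$2$5))" by (rule invertible_mult; simp add: invertible_scm h)
    show "act (scm 3 (B$2$5) ** scm 2 (1 / B$2$5)) A0 = A0"
      unfolding mat6_eq forall6 using h by (simp add: act_comp[symmetric] act_addm act_scm act_permm A0_entry sw_def)
  next
    assume cr': "CR A0 (act (scm 3 (B$2$5) ** scm 2 (1 / B$2$5)) B)"
    show "GoalP A0 (act (scm 3 (B$2$5) ** scm 2 (1 / B$2$5)) B)"
      by (rule D1c[OF cr' ]) (simp_all add: act_comp[symmetric] act_addm act_scm act_permm sl h sw_def )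
  qed
qed
lemma D1a:
  assumes cr: "CR A0 B"
    and h: "B$0$4 = 1" "B$1$4 = 0" "B$2$4 = 0" "B$3$4 = 0" "B$0$5 = 0" "B$1$5 = 0" "B$4$5 = 0" "B$2$5 = 0" "B$3$5 \<noteq> 0"
  shows "GoalP A0 B"
proof -
  have sk: "skew B" using CR_skewB[OF cr] .
  note sl = skew_low[OF sk]
  show ?thesis
  proof (rule stepB[OF _ _ cr])
    show "invertible (scm 3 (-1) ** permm (sw 2 3))" by (rule invertible_mult; simp add: invertible_scm invertible_permm sw_bij)
    show "act (scm 3 (-1) ** permm (sw 2 3)) A0 = A0"
      unfolding mat6_eq forall6 using h by (simp add: act_comp[symmetric] act_addm act_scm act_permm A0_entry sw_def)
  next
    assume cr': "CR A0 (act (scm 3 (-1) ** permm (sw 2 3)) B)"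
    show "GoalP A0 (act (scm 3 (-1) ** permm (sw 2 3)) B)"
      by (rule D1b[OF cr' ]) (simp_all add: act_comp[symmetric] act_addm act_scm act_permm sl h sw_def )
  qed
qed
lemma C5:
  assumes cr: "CR A0 B"
    and h: "B$0$4 = 1" "B$1$4 = 0" "B$2$4 = 0" "B$3$4 = 0" "B$0$5 = 0" "B$1$5 = 0" "B$4$5 = 0" "B$2$5 = 0" "B$3$5 = 0" "B$0$1 = 0" "B$0$2 = 0" "B$0$3 = 0" "B$2$3 = 0" "B$1$3 = 0" "B$1$2 = -1"
  shows "GoalP A0 B"
proof -
  have sk: "skew B" using CR_skewB[OF cr] .
  note sl = skew_low[OF sk]
  have "B = wedge 0 4 + wedge 2 1"
    unfolding mat6_eq forall6 by (simp add: sl h wedge_entry)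
  then show ?thesis using final_s by simp
qed

lemma C4:
  assumes cr: "CR A0 B"
    and h: "B$0$4 = 1" "B$1$4 = 0" "B$2$4 = 0" "B$3$4 = 0" "B$0$5 = 0" "B$1$5 = 0" "B$4$5 = 0" "B$2$5 = 0" "B$3$5 = 0" "B$0$1 = 0" "B$0$2 = 0" "B$0$3 = 0" "B$2$3 = 0" "B$1$3 = 0" "B$1$2 \<noteq> 0"
  shows "GoalP A0 B"
proof -
  have sk: "skew B" using CR_skewB[OF cr] .
  note sl = skew_low[OF sk]
  show ?thesis
  proof (rule stepB[OF _ _ cr])
    show "invertible (scm 3 (- B$1$2) ** scm 2 (-1 / B$1$2))" by (rule invertible_mult; simp add: invertible_scm h)
    show "act (scm 3 (- B$1$2) ** scm 2 (-1 / B$1$2)) A0 = A0"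
      unfolding mat6_eq forall6 using h by (simp add: act_comp[symmetric] act_addm act_scm act_permm A0_entry sw_def)
  next
    assume cr': "CR A0 (act (scm 3 (- B$1$2) ** scm 2 (-1 / B$1$2)) B)"
    show "GoalP A0 (act (scm 3 (- B$1$2) ** scm 2 (-1 / B$1$2)) B)"
      by (rule C5[OF cr' ]) (simp_all add: act_comp[symmetric] act_addm act_scm act_permm sl h sw_def )
  qed
qed
lemma C3:
  assumes cr: "CR A0 B"
    and h: "B$0$4 = 1" "B$1$4 = 0" "B$2$4 = 0" "B$3$4 = 0" "B$0$5 = 0" "B$1$5 = 0" "B$4$5 = 0" "B$2$5 = 0" "B$3$5 = 0" "B$0$1 = 0" "B$0$2 = 0" "B$0$3 = 0" "B$2$3 = 0" "B$1$2 \<noteq> 0"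
  shows "GoalP A0 B"
proof -
  have sk: "skew B" using CR_skewB[OF cr] .
  note sl = skew_low[OF sk]
  show ?thesis
  proof (rule stepB[OF _ _ cr])
    show "invertible (addm 3 2 (- B$1$3 / B$1$2))" by (simp add: invertible_addm)
    show "act (addm 3 2 (- B$1$3 / B$1$2)) A0 = A0"
      unfolding mat6_eq forall6 using h by (simp add: act_comp[symmetric] act_addm act_scm act_permm A0_entry sw_def)
  next
    assume cr': "CR A0 (act (addm 3 2 (- B$1$3 / B$1$2)) B)"
    show "GoalP A0 (act (addm 3 2 (- B$1$3 / B$1$2)) B)"
      by (rule C4[OF cr' ]) (simp_all add: act_comp[symmetric] act_addm act_scm act_permm sl h sw_def )
  qed
qed
lemma C2b:
  assumes cr: "CR A0 B"
    and h: "B$0$4 = 1" "B$1$4 = 0" "B$2$4 = 0" "B$3$4 = 0" "B$0$5 = 0" "B$1$5 = 0" "B$4$5 = 0" "B$2$5 = 0" "B$3$5 = 0" "B$0$1 = 0" "B$0$2 = 0" "B$0$3 = 0" "B$2$3 = 0" "B$1$2 = 0" "B$1$3 \<noteq> 0"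
  shows "GoalP A0 B"
proof -
  have sk: "skew B" using CR_skewB[OF cr] .
  note sl = skew_low[OF sk]
  show ?thesis
  proof (rule stepB[OF _ _ cr])
    show "invertible (addm 2 3 1)" by (simp add: invertible_addm)
    show "act (addm 2 3 1) A0 = A0"
      unfolding mat6_eq forall6 using h by (simp add: act_comp[symmetric] act_addm act_scm act_permm A0_entry sw_def)
  next
    assume cr': "CR A0 (act (addm 2 3 1) B)"
    show "GoalP A0 (act (addm 2 3 1) B)"
      by (rule C3[OF cr' ]) (simp_all add: act_comp[symmetric] act_addm act_scm act_permm sl h sw_def )
  qed
qed

lemma C2:
  assumes cr: "CR A0 B"
    and h: "B$0$4 = 1" "B$1$4 = 0" "B$2$4 = 0" "B$3$4 = 0" "B$0$5 = 0" "B$1$5 = 0" "B$4$5 = 0" "B$2$5 = 0" "B$3$5 = 0" "B$0$1 = 0" "B$0$2 = 0" "B$0$3 = 0" "B$2$3 = 0"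
  shows "GoalP A0 B"
proof (cases "B$1$2 \<noteq> 0")
  case True
  then show ?thesis by (rule C3[OF cr h])
next
  case f1: False
  show ?thesis
  proof (cases "B$1$3 \<noteq> 0")
    case True
    from f1 have "B$1$2 = 0" by simp
    then show ?thesis by (rule C2b[OF cr h _ True])
  next
    case f2: False
    have sk: "skew B" using CR_skewB[OF cr] .
    note sl = skew_low[OF sk]
    have b12: "B$1$2 = 0" "B$1$3 = 0" using f1 f2 by simp_all
    have al: "\<forall>k l. B$0$4 * B$k$l = B$0$k * B$4$l - B$0$l * B$4$k"
      unfolding forall6 by (simp add: sl h b12)
    have idf: "\<And>k l. B$0$4 * B$k$l = B$0$k * B$4$l - B$0$l * B$4$k" using al by blast
    have nz: "B$0$4 \<noteq> 0" using h by simp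
    have "rank B \<le> 2" by (rule rank_le2_pair[OF nz idf])
    moreover have "rank (lin2 0 A0 1 B) = 4" using CR_rank[OF cr, of 0 1] by simp
    ultimately show ?thesis by (simp add: lin2_01)
  qed
qed

lemma C1_3:
  assumes cr: "CR A0 B"
    and h: "B$0$4 = 1" "B$1$4 = 0" "B$2$4 = 0" "B$3$4 = 0" "B$0$5 = 0" "B$1$5 = 0" "B$4$5 = 0" "B$2$5 = 0" "B$3$5 = 0" "B$0$1 = 0" "B$0$2 = 0" "B$2$3 = 0"
  shows "GoalP A0 B"
proof -
  have sk: "skew B" using CR_skewB[OF cr] .
  note sl = skew_low[OF sk]
  show ?thesis
  proof (rule stepB[OF _ _ cr])
    show "invertible (addm 3 4 (- B$0$3))" by (simp add: invertible_addm)
    show "act (addm 3 4 (- B$0$3)) A0 = A0"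
      unfolding mat6_eq forall6 using h by (simp add: act_comp[symmetric] act_addm act_scm act_permm A0_entry sw_def)
  next
    assume cr': "CR A0 (act (addm 3 4 (- B$0$3)) B)"
    show "GoalP A0 (act (addm 3 4 (- B$0$3)) B)"
      by (rule C2[OF cr' ]) (simp_all add: act_comp[symmetric] act_addm act_scm act_permm sl h sw_def )
  qed
qed
lemma C1_2:
  assumes cr: "CR A0 B"
    and h: "B$0$4 = 1" "B$1$4 = 0" "B$2$4 = 0" "B$3$4 = 0" "B$0$5 = 0" "B$1$5 = 0" "B$4$5 = 0" "B$2$5 = 0" "B$3$5 = 0" "B$0$1 = 0" "B$2$3 = 0"
  shows "GoalP A0 B"
proof -
  have sk: "skew B" using CR_skewB[OF cr] .
  note sl = skew_low[OF sk]
  show ?thesis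
  proof (rule stepB[OF _ _ cr])
    show "invertible (addm 2 4 (- B$0$2))" by (simp add: invertible_addm)
    show "act (addm 2 4 (- B$0$2)) A0 = A0"
      unfolding mat6_eq forall6 using h by (simp add: act_comp[symmetric] act_addm act_scm act_permm A0_entry sw_def)
  next
    assume cr': "CR A0 (act (addm 2 4 (- B$0$2)) B)"
    show "GoalP A0 (act (addm 2 4 (- B$0$2)) B)"
      by (rule C1_3[OF cr' ]) (simp_all add: act_comp[symmetric] act_addm act_scm act_permm sl h sw_def )
  qed
qed
lemma C1_1:
  assumes cr: "CR A0 B"
    and h: "B$0$4 = 1" "B$1$4 = 0" "B$2$4 = 0" "B$3$4 = 0" "B$0$5 = 0" "B$1$5 = 0" "B$4$5 = 0" "B$2$5 = 0" "B$3$5 = 0" "B$2$3 = 0"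
  shows "GoalP A0 B"
proof -
  have sk: "skew B" using CR_skewB[OF cr] .
  note sl = skew_low[OF sk]
  show ?thesis
  proof (rule stepB[OF _ _ cr])
    show "invertible (addm 1 4 (- B$0$1))" by (simp add: invertible_addm)
    show "act (addm 1 4 (- B$0$1)) A0 = A0"
      unfolding mat6_eq forall6 using h by (simp add: act_comp[symmetric] act_addm act_scm act_permm A0_entry sw_def)
  next
    assume cr': "CR A0 (act (addm 1 4 (- B$0$1)) B)"
    show "GoalP A0 (act (addm 1 4 (- B$0$1)) B)"
      by (rule C1_2[OF cr' ]) (simp_all add: act_comp[symmetric] act_addm act_scm act_permm sl h sw_def )
  qed
qed
lemma C0:
  assumes cr: "CR A0 B"
    and h: "B$0$4 = 1" "B$1$4 = 0" "B$2$4 = 0" "B$3$4 = 0" "B$0$5 = 0" "B$1$5 = 0" "B$4$5 = 0" "B$2$5 = 0" "B$3$5 = 0"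
  shows "GoalP A0 B"
proof -
  have sk: "skew B" using CR_skewB[OF cr] .
  note sl = skew_low[OF sk]
  have "GoalP A0 (lin2 (- B$2$3) A0 1 B)"
    by (rule C1_1[OF CR_change[OF cr]]) (simp_all add: A0_entry sl h)
  then show ?thesis by (rule GoalP_change)
qed

lemma D1:
  assumes cr: "CR A0 B"
    and h: "B$0$4 = 1" "B$1$4 = 0" "B$2$4 = 0" "B$3$4 = 0" "B$0$5 = 0" "B$1$5 = 0" "B$4$5 = 0"
    and nz: "B$2$5 \<noteq> 0 \<or> B$3$5 \<noteq> 0"
  shows "GoalP A0 B"
proof (cases "B$2$5 \<noteq> 0")
  case True
  then show ?thesis by (rule D1b[OF cr h])
next
  case False
  then have "B$2$5 = 0" "B$3$5 \<noteq> 0" using nz by auto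
  then show ?thesis by (rule D1a[OF cr h])
qed

lemma B5:
  assumes cr: "CR A0 B"
    and h: "B$0$4 = 1" "B$1$4 = 0" "B$2$4 = 0" "B$3$4 = 0" "B$0$5 = 0" "B$1$5 = 0" "B$4$5 = 0"
  shows "GoalP A0 B"
proof (cases "B$2$5 = 0 \<and> B$3$5 = 0")
  case True
  then show ?thesis using C0[OF cr h] by blast
next
  case False
  then show ?thesis using D1[OF cr h] by blast
qed

lemma B4:
  assumes cr: "CR A0 B"
    and h: "B$0$4 = 1" "B$1$4 = 0" "B$2$4 = 0" "B$3$4 = 0" "B$0$5 = 0"
  shows "GoalP A0 B"
proof -
  have sk: "skew B" using CR_skewB[OF cr] .
  note sl = skew_low[OF sk]
  have p0: "pf6 (lin2 0 A0 1 B) = 0" using CR_pf[OF cr, of 0 1] by simp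
  have p1: "pf6 (lin2 1 A0 1 B) = 0" using CR_pf[OF cr, of 1 1] by simp
  have p2: "pf6 (lin2 2 A0 1 B) = 0" using CR_pf[OF cr, of 2 1] by simp
  have e45: "pf6 (lin2 2 A0 1 B) - 2 * pf6 (lin2 1 A0 1 B) + pf6 (lin2 0 A0 1 B) = 2 * B$4$5"
    by (simp add: pf6_def pf4_def A0_entry sl h; algebra)
  have b45: "B$4$5 = 0" using e45 p0 p1 p2 by simp
  have e15: "pf6 (lin2 1 A0 1 B) - pf6 (lin2 0 A0 1 B) = B$4$5 * (1 + B$0$1 + B$2$3) - B$1$5"
    by (simp add: pf6_def pf4_def A0_entry sl h; algebra)
  have b15: "B$1$5 = 0" using e15 p0 p1 b45 by simp
  show ?thesis by (rule B5[OF cr h b15 b45])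
qed

lemma B3d:
  assumes cr: "CR A0 B"
    and h: "B$0$4 = 1" "B$1$4 = 0" "B$2$4 = 0" "B$3$4 = 0"
  shows "GoalP A0 B"
proof -
  have sk: "skew B" using CR_skewB[OF cr] .
  note sl = skew_low[OF sk]
  show ?thesis
  proof (rule stepB[OF _ _ cr])
    show "invertible (addm 5 4 (- B$0$5))" by (simp add: invertible_addm)
    show "act (addm 5 4 (- B$0$5)) A0 = A0"
      unfolding mat6_eq forall6 using h by (simp add: act_comp[symmetric] act_addm act_scm act_permm A0_entry sw_def)
  next
    assume cr': "CR A0 (act (addm 5 4 (- B$0$5)) B)"
    show "GoalP A0 (act (addm 5 4 (- B$0$5)) B)"
      by (rule B4[OF cr' ]) (simp_all add: act_comp[symmetric] act_addm act_scm act_permm sl h sw_def )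
  qed
qed
lemma B3c:
  assumes cr: "CR A0 B"
    and h: "B$0$4 = 1" "B$2$4 = 0" "B$3$4 = 0"
  shows "GoalP A0 B"
proof -
  have sk: "skew B" using CR_skewB[OF cr] .
  note sl = skew_low[OF sk]
  show ?thesis
  proof (rule stepB[OF _ _ cr])
    show "invertible (addm 1 0 (- B$1$4))" by (simp add: invertible_addm)
    show "act (addm 1 0 (- B$1$4)) A0 = A0"
      unfolding mat6_eq forall6 using h by (simp add: act_comp[symmetric] act_addm act_scm act_permm A0_entry sw_def)
  next
    assume cr': "CR A0 (act (addm 1 0 (- B$1$4)) B)"
    show "GoalP A0 (act (addm 1 0 (- B$1$4)) B)"
      by (rule B3d[OF cr' ]) (simp_all add: act_comp[symmetric] act_addm act_scm act_permm sl h sw_def )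
  qed
qed
lemma B3b:
  assumes cr: "CR A0 B"
    and h: "B$0$4 = 1" "B$3$4 = 0"
  shows "GoalP A0 B"
proof -
  have sk: "skew B" using CR_skewB[OF cr] .
  note sl = skew_low[OF sk]
  show ?thesis
  proof (rule stepB[OF _ _ cr])
    show "invertible (addm 1 3 (B$2$4) ** addm 2 0 (- B$2$4))" by (rule invertible_mult; simp add: invertible_addm)
    show "act (addm 1 3 (B$2$4) ** addm 2 0 (- B$2$4)) A0 = A0"
      unfolding mat6_eq forall6 using h by (simp add: act_comp[symmetric] act_addm act_scm act_permm A0_entry sw_def)
  next
    assume cr': "CR A0 (act (addm 1 3 (B$2$4) ** addm 2 0 (- B$2$4)) B)"
    show "GoalP A0 (act (addm 1 3 (B$2$4) ** addm 2 0 (- B$2$4)) B)"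
      by (rule B3c[OF cr' ]) (simp_all add: act_comp[symmetric] act_addm act_scm act_permm sl h sw_def )
  qed
qed
lemma B3a:
  assumes cr: "CR A0 B"
    and h: "B$0$4 = 1"
  shows "GoalP A0 B"
proof -
  have sk: "skew B" using CR_skewB[OF cr] .
  note sl = skew_low[OF sk]
  show ?thesis
  proof (rule stepB[OF _ _ cr])
    show "invertible (addm 1 2 (- B$3$4) ** addm 3 0 (- B$3$4))" by (rule invertible_mult; simp add: invertible_addm)
    show "act (addm 1 2 (- B$3$4) ** addm 3 0 (- B$3$4)) A0 = A0"
      unfolding mat6_eq forall6 using h by (simp add: act_comp[symmetric] act_addm act_scm act_permm A0_entry sw_def)
  next
    assume cr': "CR A0 (act (addm 1 2 (- B$3$4) ** addm 3 0 (- B$3$4)) B)"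
    show "GoalP A0 (act (addm 1 2 (- B$3$4) ** addm 3 0 (- B$3$4)) B)"
      by (rule B3b[OF cr' ]) (simp_all add: act_comp[symmetric] act_addm act_scm act_permm sl h sw_def )
  qed
qed
lemma B2:
  assumes cr: "CR A0 B"
    and h: "B$0$4 \<noteq> 0"
  shows "GoalP A0 B"
proof -
  have sk: "skew B" using CR_skewB[OF cr] .
  note sl = skew_low[OF sk]
  show ?thesis
  proof (rule stepB[OF _ _ cr])
    show "invertible (scm 1 (B$0$4) ** scm 0 (1 / B$0$4))" by (rule invertible_mult; simp add: invertible_scm h)
    show "act (scm 1 (B$0$4) ** scm 0 (1 / B$0$4)) A0 = A0"
      unfolding mat6_eq forall6 using h by (simp add: act_comp[symmetric] act_addm act_scm act_permm A0_entry sw_def)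
  next
    assume cr': "CR A0 (act (scm 1 (B$0$4) ** scm 0 (1 / B$0$4)) B)"
    show "GoalP A0 (act (scm 1 (B$0$4) ** scm 0 (1 / B$0$4)) B)"
      by (rule B3a[OF cr' ]) (simp_all add: act_comp[symmetric] act_addm act_scm act_permm sl h sw_def )
  qed
qed
lemma B1w:
  assumes cr: "CR A0 B"
    and h: "B$0$4 = 0" "B$1$4 \<noteq> 0"
  shows "GoalP A0 B"
proof -
  have sk: "skew B" using CR_skewB[OF cr] .
  note sl = skew_low[OF sk]
  show ?thesis
  proof (rule stepB[OF _ _ cr])
    show "invertible (scm 1 (-1) ** permm (sw 0 1))" by (rule invertible_mult; simp add: invertible_scm invertible_permm sw_bij)
    show "act (scm 1 (-1) ** permm (sw 0 1)) A0 = A0"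
      unfolding mat6_eq forall6 using h by (simp add: act_comp[symmetric] act_addm act_scm act_permm A0_entry sw_def)
  next
    assume cr': "CR A0 (act (scm 1 (-1) ** permm (sw 0 1)) B)"
    show "GoalP A0 (act (scm 1 (-1) ** permm (sw 0 1)) B)"
      by (rule B2[OF cr' ]) (simp_all add: act_comp[symmetric] act_addm act_scm act_permm sl h sw_def )
  qed
qed
lemma B1:
  assumes cr: "CR A0 B"
    and h: "B$0$4 \<noteq> 0 \<or> B$1$4 \<noteq> 0"
  shows "GoalP A0 B"
proof (cases "B$0$4 \<noteq> 0")
  case True
  then show ?thesis by (rule B2[OF cr])
next
  case False
  then have "B$0$4 = 0" "B$1$4 \<noteq> 0" using h by auto
  then show ?thesis by (rule B1w[OF cr])
qed

lemma B1p:
  assumes cr: "CR A0 B"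
    and h: "B$0$4 = 0" "B$1$4 = 0" "B$2$4 \<noteq> 0 \<or> B$3$4 \<noteq> 0"
  shows "GoalP A0 B"
proof -
  have sk: "skew B" using CR_skewB[OF cr] .
  note sl = skew_low[OF sk]
  show ?thesis
  proof (rule stepB[OF _ _ cr])
    show "invertible (permm (sw 0 2 \<circ> sw 1 3))" by (rule invertible_permm; simp add: sw_bij bij_comp)
    show "act (permm (sw 0 2 \<circ> sw 1 3)) A0 = A0"
      unfolding mat6_eq forall6 using h by (simp add: act_comp[symmetric] act_addm act_scm act_permm A0_entry sw_def)
  next
    assume cr': "CR A0 (act (permm (sw 0 2 \<circ> sw 1 3)) B)"
    show "GoalP A0 (act (permm (sw 0 2 \<circ> sw 1 3)) B)"
      by (rule B1[OF cr' ]) (insert h, auto simp: act_comp[symmetric] act_addm act_scm act_permm sl h sw_def )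
  qed
qed
lemma B1q:
  assumes cr: "CR A0 B"
    and h: "B$0$4 \<noteq> 0 \<or> B$1$4 \<noteq> 0 \<or> B$2$4 \<noteq> 0 \<or> B$3$4 \<noteq> 0"
  shows "GoalP A0 B"
proof (cases "B$0$4 \<noteq> 0 \<or> B$1$4 \<noteq> 0")
  case True
  then show ?thesis by (rule B1[OF cr])
next
  case False
  then have "B$0$4 = 0" "B$1$4 = 0" "B$2$4 \<noteq> 0 \<or> B$3$4 \<noteq> 0" using h by auto
  then show ?thesis by (rule B1p[OF cr])
qed

lemma B0s:
  assumes cr: "CR A0 B"
    and h: "B$0$4 = 0" "B$1$4 = 0" "B$2$4 = 0" "B$3$4 = 0" "B$0$5 \<noteq> 0 \<or> B$1$5 \<noteq> 0 \<or> B$2$5 \<noteq> 0 \<or> B$3$5 \<noteq> 0"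
  shows "GoalP A0 B"
proof -
  have sk: "skew B" using CR_skewB[OF cr] .
  note sl = skew_low[OF sk]
  show ?thesis
  proof (rule stepB[OF _ _ cr])
    show "invertible (permm (sw 4 5))" by (rule invertible_permm; simp add: sw_bij)
    show "act (permm (sw 4 5)) A0 = A0"
      unfolding mat6_eq forall6 using h by (simp add: act_comp[symmetric] act_addm act_scm act_permm A0_entry sw_def)
  next
    assume cr': "CR A0 (act (permm (sw 4 5)) B)"
    show "GoalP A0 (act (permm (sw 4 5)) B)"
      by (rule B1q[OF cr' ]) (insert h, auto simp: act_comp[symmetric] act_addm act_scm act_permm sl h sw_def )
  qed
qed

lemma N0:
  assumes cr: "CR A0 B"
    and h: "B$0$4 = 0" "B$1$4 = 0" "B$2$4 = 0" "B$3$4 = 0" "B$0$5 = 0" "B$1$5 = 0" "B$2$5 = 0" "B$3$5 = 0"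
  shows False
proof -
  have sk: "skew B" using CR_skewB[OF cr] .
  note sl = skew_low[OF sk]
  have p0: "pf6 (lin2 0 A0 1 B) = 0" using CR_pf[OF cr, of 0 1] by simp
  have p1: "pf6 (lin2 1 A0 1 B) = 0" using CR_pf[OF cr, of 1 1] by simp
  have p2: "pf6 (lin2 2 A0 1 B) = 0" using CR_pf[OF cr, of 2 1] by simp
  have e45: "pf6 (lin2 2 A0 1 B) - 2 * pf6 (lin2 1 A0 1 B) + pf6 (lin2 0 A0 1 B) = 2 * B$4$5"
    by (simp add: pf6_def pf4_def A0_entry sl h; algebra)
  have b45: "B$4$5 = 0" using e45 p0 p1 p2 by simp
  define p where "p = B$0$1 + B$2$3"
  define q where "q = B$0$1 * B$2$3 - B$0$2 * B$1$3 + B$0$3 * B$1$2"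
  define r where "r = csqrt (p^2 - 4*q)"
  define s where "s = (r - p) / 2"
  have r2: "r^2 = p^2 - 4*q" by (simp add: r_def)
  have skM: "skew (lin2 s A0 1 B)"
    using skew_lin2 CR_skewA[OF cr] CR_skewB[OF cr] by blast
  have z4: "(lin2 s A0 1 B)$k$4 = 0" for k
    using exhaust_6[of k] by (elim disjE) (simp_all add: A0_entry sl h b45)
  have z5: "(lin2 s A0 1 B)$k$5 = 0" for k
    using exhaust_6[of k] by (elim disjE) (simp_all add: A0_entry sl h b45)
  have "pf4 (lin2 s A0 1 B) 0 1 2 3 = (s + B$0$1) * (s + B$2$3) - B$0$2 * B$1$3 + B$0$3 * B$1$2"
    by (simp add: pf4_def A0_entry sl)
  also have "\<dots> = (r^2 - (p^2 - 4*q)) / 4"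
    by (simp add: s_def p_def q_def field_simps power2_eq_square; algebra)
  also have "\<dots> = 0" using r2 by simp
  finally have pf: "pf4 (lin2 s A0 1 B) 0 1 2 3 = 0" .
  have "rank (lin2 s A0 1 B) \<le> 2" by (rule rank_le2_U[OF skM z4 z5 pf])
  moreover have "rank (lin2 s A0 1 B) = 4" using CR_rank[OF cr, of s 1] by simp
  ultimately show False by simp
qed

lemma B0:
  assumes cr: "CR A0 B"
  shows "GoalP A0 B"
proof (cases "B$0$4 \<noteq> 0 \<or> B$1$4 \<noteq> 0 \<or> B$2$4 \<noteq> 0 \<or> B$3$4 \<noteq> 0")
  case True
  then show ?thesis by (rule B1q[OF cr])
next
  case f: False
  then have z: "B$0$4 = 0" "B$1$4 = 0" "B$2$4 = 0" "B$3$4 = 0" by auto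
  show ?thesis
  proof (cases "B$0$5 \<noteq> 0 \<or> B$1$5 \<noteq> 0 \<or> B$2$5 \<noteq> 0 \<or> B$3$5 \<noteq> 0")
    case True
    then show ?thesis by (rule B0s[OF cr z])
  next
    case False
    then have "B$0$5 = 0" "B$1$5 = 0" "B$2$5 = 0" "B$3$5 = 0" by auto
    then show ?thesis using N0[OF cr z] by blast
  qed
qed

definition NF :: "complex^6^6 \<Rightarrow> bool" where
  "NF A \<longleftrightarrow> (\<exists>h. invertible h \<and> act h A = A0)"

lemma stepA: "invertible h \<Longrightarrow> skew A \<Longrightarrow> rank A = 4 \<Longrightarrow>
   (skew (act h A) \<Longrightarrow> rank (act h A) = 4 \<Longrightarrow> NF (act h A)) \<Longrightarrow> NF A"
proof -
  assume h: "invertible h" and sk: "skew A" and rk: "rank A = 4"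
    and n: "skew (act h A) \<Longrightarrow> rank (act h A) = 4 \<Longrightarrow> NF (act h A)"
  have "NF (act h A)" using n act_skew[OF sk] rank_act[OF h] rk by simp
  then obtain g where g: "invertible g" "act g (act h A) = A0" unfolding NF_def by blast
  have "invertible (g ** h)" using g(1) h by (rule invertible_mult)
  moreover have "act (g ** h) A = A0" using g(2) by (simp add: act_comp)
  ultimately show ?thesis unfolding NF_def by blast
qed

lemma invertible_one: "invertible (mat 1 :: complex^6^6)"
  unfolding invertible_right_inverse by (rule exI[of _ "mat 1"]) simp

lemma SA4:
  assumes sk: "skew A" and rk: "rank A = 4"
    and h: "A$0$1 = 1" "A$2$3 = 1" "A$0$2 = 0" "A$0$3 = 0" "A$0$4 = 0" "A$0$5 = 0" "A$1$2 = 0" "A$1$3 = 0" "A$1$4 = 0" "A$1$5 = 0" "A$2$4 = 0" "A$3$4 = 0" "A$2$5 = 0" "A$3$5 = 0"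
  shows "NF A"
proof -
  note sl = skew_low[OF sk]
  have "pf6 A = A$4$5" by (simp add: pf6_def pf4_def sl h)
  then have "A$4$5 = 0" using rank_pf[OF sk] rk by fastforce
  then have "A = A0" unfolding mat6_eq forall6 by (simp add: sl h A0_entry)
  then show ?thesis unfolding NF_def using invertible_one act_one by metis
qed

lemma SA3f:
  assumes sk: "skew A" and rk: "rank A = 4"
    and h: "A$0$1 = 1" "A$2$3 = 1" "A$0$2 = 0" "A$0$3 = 0" "A$0$4 = 0" "A$0$5 = 0" "A$1$2 = 0" "A$1$3 = 0" "A$1$4 = 0" "A$1$5 = 0" "A$2$4 = 0" "A$3$4 = 0" "A$2$5 = 0"
  shows "NF A"
proof -
  note sl = skew_low[OF sk]
  have inv: "invertible (addm 5 2 (A$3$5))" by (simp add: invertible_addm)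
  show ?thesis
  proof (rule stepA[OF inv sk rk])
    assume sk': "skew (act (addm 5 2 (A$3$5)) A)" and rk': "rank (act (addm 5 2 (A$3$5)) A) = 4"
    show "NF (act (addm 5 2 (A$3$5)) A)"
      by (rule SA4[OF sk' rk']) (simp_all add: act_comp[symmetric] act_addm act_scm act_permm sl h sw_def)
  qed
qed

lemma SA3e:
  assumes sk: "skew A" and rk: "rank A = 4"
    and h: "A$0$1 = 1" "A$2$3 = 1" "A$0$2 = 0" "A$0$3 = 0" "A$0$4 = 0" "A$0$5 = 0" "A$1$2 = 0" "A$1$3 = 0" "A$1$4 = 0" "A$1$5 = 0" "A$2$4 = 0" "A$3$4 = 0"
  shows "NF A"
proof -
  note sl = skew_low[OF sk]
  have inv: "invertible (addm 5 3 (- A$2$5))" by (simp add: invertible_addm)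
  show ?thesis
  proof (rule stepA[OF inv sk rk])
    assume sk': "skew (act (addm 5 3 (- A$2$5)) A)" and rk': "rank (act (addm 5 3 (- A$2$5)) A) = 4"
    show "NF (act (addm 5 3 (- A$2$5)) A)"
      by (rule SA3f[OF sk' rk']) (simp_all add: act_comp[symmetric] act_addm act_scm act_permm sl h sw_def)
  qed
qed

lemma SA3d:
  assumes sk: "skew A" and rk: "rank A = 4"
    and h: "A$0$1 = 1" "A$2$3 = 1" "A$0$2 = 0" "A$0$3 = 0" "A$0$4 = 0" "A$0$5 = 0" "A$1$2 = 0" "A$1$3 = 0" "A$1$4 = 0" "A$1$5 = 0" "A$2$4 = 0"
  shows "NF A"
proof -
  note sl = skew_low[OF sk]
  have inv: "invertible (addm 4 2 (A$3$4))" by (simp add: invertible_addm)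
  show ?thesis
  proof (rule stepA[OF inv sk rk])
    assume sk': "skew (act (addm 4 2 (A$3$4)) A)" and rk': "rank (act (addm 4 2 (A$3$4)) A) = 4"
    show "NF (act (addm 4 2 (A$3$4)) A)"
      by (rule SA3e[OF sk' rk']) (simp_all add: act_comp[symmetric] act_addm act_scm act_permm sl h sw_def)
  qed
qed

lemma SA3c:
  assumes sk: "skew A" and rk: "rank A = 4"
    and h: "A$0$1 = 1" "A$2$3 = 1" "A$0$2 = 0" "A$0$3 = 0" "A$0$4 = 0" "A$0$5 = 0" "A$1$2 = 0" "A$1$3 = 0" "A$1$4 = 0" "A$1$5 = 0"
  shows "NF A"
proof -
  note sl = skew_low[OF sk]
  have inv: "invertible (addm 4 3 (- A$2$4))" by (simp add: invertible_addm)
  show ?thesis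
  proof (rule stepA[OF inv sk rk])
    assume sk': "skew (act (addm 4 3 (- A$2$4)) A)" and rk': "rank (act (addm 4 3 (- A$2$4)) A) = 4"
    show "NF (act (addm 4 3 (- A$2$4)) A)"
      by (rule SA3d[OF sk' rk']) (simp_all add: act_comp[symmetric] act_addm act_scm act_permm sl h sw_def)
  qed
qed

lemma SA3:
  assumes sk: "skew A" and rk: "rank A = 4"
    and h: "A$0$1 = 1" "A$0$2 = 0" "A$0$3 = 0" "A$0$4 = 0" "A$0$5 = 0" "A$1$2 = 0" "A$1$3 = 0" "A$1$4 = 0" "A$1$5 = 0" "A$2$3 \<noteq> 0"
  shows "NF A"
proof -
  note sl = skew_low[OF sk]
  have inv: "invertible (scm 2 (1 / A$2$3))" by (simp add: invertible_scm h)
  show ?thesis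
  proof (rule stepA[OF inv sk rk])
    assume sk': "skew (act (scm 2 (1 / A$2$3)) A)" and rk': "rank (act (scm 2 (1 / A$2$3)) A) = 4"
    show "NF (act (scm 2 (1 / A$2$3)) A)"
      by (rule SA3c[OF sk' rk']) (simp_all add: act_comp[symmetric] act_addm act_scm act_permm sl h sw_def)
  qed
qed

lemma SA2_24:
  assumes sk: "skew A" and rk: "rank A = 4"
    and h: "A$0$1 = 1" "A$0$2 = 0" "A$0$3 = 0" "A$0$4 = 0" "A$0$5 = 0" "A$1$2 = 0" "A$1$3 = 0" "A$1$4 = 0" "A$1$5 = 0" "A$2$4 \<noteq> 0"
  shows "NF A"
proof -
  note sl = skew_low[OF sk]
  have inv: "invertible (permm (sw 3 4))" by (rule invertible_permm; simp add: sw_bij bij_comp)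
  show ?thesis
  proof (rule stepA[OF inv sk rk])
    assume sk': "skew (act (permm (sw 3 4)) A)" and rk': "rank (act (permm (sw 3 4)) A) = 4"
    show "NF (act (permm (sw 3 4)) A)"
      by (rule SA3[OF sk' rk']) (simp_all add: act_comp[symmetric] act_addm act_scm act_permm sl h sw_def)
  qed
qed

lemma SA2_25:
  assumes sk: "skew A" and rk: "rank A = 4"
    and h: "A$0$1 = 1" "A$0$2 = 0" "A$0$3 = 0" "A$0$4 = 0" "A$0$5 = 0" "A$1$2 = 0" "A$1$3 = 0" "A$1$4 = 0" "A$1$5 = 0" "A$2$5 \<noteq> 0"
  shows "NF A"
proof -
  note sl = skew_low[OF sk]
  have inv: "invertible (permm (sw 3 5))" by (rule invertible_permm; simp add: sw_bij bij_comp)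
  show ?thesis
  proof (rule stepA[OF inv sk rk])
    assume sk': "skew (act (permm (sw 3 5)) A)" and rk': "rank (act (permm (sw 3 5)) A) = 4"
    show "NF (act (permm (sw 3 5)) A)"
      by (rule SA3[OF sk' rk']) (simp_all add: act_comp[symmetric] act_addm act_scm act_permm sl h sw_def)
  qed
qed

lemma SA2_34:
  assumes sk: "skew A" and rk: "rank A = 4"
    and h: "A$0$1 = 1" "A$0$2 = 0" "A$0$3 = 0" "A$0$4 = 0" "A$0$5 = 0" "A$1$2 = 0" "A$1$3 = 0" "A$1$4 = 0" "A$1$5 = 0" "A$3$4 \<noteq> 0"
  shows "NF A"
proof -
  note sl = skew_low[OF sk]
  have inv: "invertible (permm (sw 2 3 \<circ> sw 3 4))" by (rule invertible_permm; simp add: sw_bij bij_comp)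
  show ?thesis
  proof (rule stepA[OF inv sk rk])
    assume sk': "skew (act (permm (sw 2 3 \<circ> sw 3 4)) A)" and rk': "rank (act (permm (sw 2 3 \<circ> sw 3 4)) A) = 4"
    show "NF (act (permm (sw 2 3 \<circ> sw 3 4)) A)"
      by (rule SA3[OF sk' rk']) (simp_all add: act_comp[symmetric] act_addm act_scm act_permm sl h sw_def)
  qed
qed

lemma SA2_35:
  assumes sk: "skew A" and rk: "rank A = 4"
    and h: "A$0$1 = 1" "A$0$2 = 0" "A$0$3 = 0" "A$0$4 = 0" "A$0$5 = 0" "A$1$2 = 0" "A$1$3 = 0" "A$1$4 = 0" "A$1$5 = 0" "A$3$5 \<noteq> 0"
  shows "NF A"
proof -
  note sl = skew_low[OF sk]
  have inv: "invertible (permm (sw 2 3 \<circ> sw 3 5))" by (rule invertible_permm; simp add: sw_bij bij_comp)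
  show ?thesis
  proof (rule stepA[OF inv sk rk])
    assume sk': "skew (act (permm (sw 2 3 \<circ> sw 3 5)) A)" and rk': "rank (act (permm (sw 2 3 \<circ> sw 3 5)) A) = 4"
    show "NF (act (permm (sw 2 3 \<circ> sw 3 5)) A)"
      by (rule SA3[OF sk' rk']) (simp_all add: act_comp[symmetric] act_addm act_scm act_permm sl h sw_def)
  qed
qed

lemma SA2_45:
  assumes sk: "skew A" and rk: "rank A = 4"
    and h: "A$0$1 = 1" "A$0$2 = 0" "A$0$3 = 0" "A$0$4 = 0" "A$0$5 = 0" "A$1$2 = 0" "A$1$3 = 0" "A$1$4 = 0" "A$1$5 = 0" "A$4$5 \<noteq> 0"
  shows "NF A"
proof -
  note sl = skew_low[OF sk]
  have inv: "invertible (permm (sw 2 4 \<circ> sw 3 5))" by (rule invertible_permm; simp add: sw_bij bij_comp)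
  show ?thesis
  proof (rule stepA[OF inv sk rk])
    assume sk': "skew (act (permm (sw 2 4 \<circ> sw 3 5)) A)" and rk': "rank (act (permm (sw 2 4 \<circ> sw 3 5)) A) = 4"
    show "NF (act (permm (sw 2 4 \<circ> sw 3 5)) A)"
      by (rule SA3[OF sk' rk']) (simp_all add: act_comp[symmetric] act_addm act_scm act_permm sl h sw_def)
  qed
qed

lemma SA2:
  assumes sk: "skew A" and rk: "rank A = 4"
    and h: "A$0$1 = 1" "A$0$2 = 0" "A$0$3 = 0" "A$0$4 = 0" "A$0$5 = 0" "A$1$2 = 0" "A$1$3 = 0" "A$1$4 = 0" "A$1$5 = 0"
  shows "NF A"
proof -
  note sl = skew_low[OF sk]
  have "A$2$3 \<noteq> 0 \<or> A$2$4 \<noteq> 0 \<or> A$2$5 \<noteq> 0 \<or> A$3$4 \<noteq> 0 \<or> A$3$5 \<noteq> 0 \<or> A$4$5 \<noteq> 0"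
  proof (rule ccontr)
    assume "\<not> ?thesis"
    then have z: "A$2$3 = 0" "A$2$4 = 0" "A$2$5 = 0" "A$3$4 = 0" "A$3$5 = 0" "A$4$5 = 0" by auto
    have al: "\<forall>k l. A$0$1 * A$k$l = A$0$k * A$1$l - A$0$l * A$1$k"
      unfolding forall6 by (simp add: sl h z)
    have idf: "\<And>k l. A$0$1 * A$k$l = A$0$k * A$1$l - A$0$l * A$1$k" using al by blast
    have nz: "A$0$1 \<noteq> 0" using h by simp
    have "rank A \<le> 2" by (rule rank_le2_pair[OF nz idf])
    then show False using rk by simp
  qed
  then show ?thesis
  proof (elim disjE)
    assume "A$2$3 \<noteq> 0" then show ?thesis by (rule SA3[OF sk rk h])
  next
    assume "A$2$4 \<noteq> 0" then show ?thesis by (rule SA2_24[OF sk rk h])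
  next
    assume "A$2$5 \<noteq> 0" then show ?thesis by (rule SA2_25[OF sk rk h])
  next
    assume "A$3$4 \<noteq> 0" then show ?thesis by (rule SA2_34[OF sk rk h])
  next
    assume "A$3$5 \<noteq> 0" then show ?thesis by (rule SA2_35[OF sk rk h])
  next
    assume "A$4$5 \<noteq> 0" then show ?thesis by (rule SA2_45[OF sk rk h])
  qed
qed

lemma SA1_5b:
  assumes sk: "skew A" and rk: "rank A = 4"
    and h: "A$0$1 = 1" "A$0$2 = 0" "A$0$3 = 0" "A$0$4 = 0" "A$1$2 = 0" "A$1$3 = 0" "A$1$4 = 0" "A$0$5 = 0"
  shows "NF A"
proof -
  note sl = skew_low[OF sk]
  have inv: "invertible (addm 5 0 (A$1$5))" by (simp add: invertible_addm)
  show ?thesis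
  proof (rule stepA[OF inv sk rk])
    assume sk': "skew (act (addm 5 0 (A$1$5)) A)" and rk': "rank (act (addm 5 0 (A$1$5)) A) = 4"
    show "NF (act (addm 5 0 (A$1$5)) A)"
      by (rule SA2[OF sk' rk']) (simp_all add: act_comp[symmetric] act_addm act_scm act_permm sl h sw_def)
  qed
qed

lemma SA1_5a:
  assumes sk: "skew A" and rk: "rank A = 4"
    and h: "A$0$1 = 1" "A$0$2 = 0" "A$0$3 = 0" "A$0$4 = 0" "A$1$2 = 0" "A$1$3 = 0" "A$1$4 = 0"
  shows "NF A"
proof -
  note sl = skew_low[OF sk]
  have inv: "invertible (addm 5 1 (- A$0$5))" by (simp add: invertible_addm)
  show ?thesis
  proof (rule stepA[OF inv sk rk])
    assume sk': "skew (act (addm 5 1 (- A$0$5)) A)" and rk': "rank (act (addm 5 1 (- A$0$5)) A) = 4"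
    show "NF (act (addm 5 1 (- A$0$5)) A)"
      by (rule SA1_5b[OF sk' rk']) (simp_all add: act_comp[symmetric] act_addm act_scm act_permm sl h sw_def)
  qed
qed

lemma SA1_4b:
  assumes sk: "skew A" and rk: "rank A = 4"
    and h: "A$0$1 = 1" "A$0$2 = 0" "A$0$3 = 0" "A$1$2 = 0" "A$1$3 = 0" "A$0$4 = 0"
  shows "NF A"
proof -
  note sl = skew_low[OF sk]
  have inv: "invertible (addm 4 0 (A$1$4))" by (simp add: invertible_addm)
  show ?thesis
  proof (rule stepA[OF inv sk rk])
    assume sk': "skew (act (addm 4 0 (A$1$4)) A)" and rk': "rank (act (addm 4 0 (A$1$4)) A) = 4"
    show "NF (act (addm 4 0 (A$1$4)) A)"
      by (rule SA1_5a[OF sk' rk']) (simp_all add: act_comp[symmetric] act_addm act_scm act_permm sl h sw_def)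
  qed
qed

lemma SA1_4a:
  assumes sk: "skew A" and rk: "rank A = 4"
    and h: "A$0$1 = 1" "A$0$2 = 0" "A$0$3 = 0" "A$1$2 = 0" "A$1$3 = 0"
  shows "NF A"
proof -
  note sl = skew_low[OF sk]
  have inv: "invertible (addm 4 1 (- A$0$4))" by (simp add: invertible_addm)
  show ?thesis
  proof (rule stepA[OF inv sk rk])
    assume sk': "skew (act (addm 4 1 (- A$0$4)) A)" and rk': "rank (act (addm 4 1 (- A$0$4)) A) = 4"
    show "NF (act (addm 4 1 (- A$0$4)) A)"
      by (rule SA1_4b[OF sk' rk']) (simp_all add: act_comp[symmetric] act_addm act_scm act_permm sl h sw_def)
  qed
qed

lemma SA1_3b:
  assumes sk: "skew A" and rk: "rank A = 4"
    and h: "A$0$1 = 1" "A$0$2 = 0" "A$1$2 = 0" "A$0$3 = 0"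
  shows "NF A"
proof -
  note sl = skew_low[OF sk]
  have inv: "invertible (addm 3 0 (A$1$3))" by (simp add: invertible_addm)
  show ?thesis
  proof (rule stepA[OF inv sk rk])
    assume sk': "skew (act (addm 3 0 (A$1$3)) A)" and rk': "rank (act (addm 3 0 (A$1$3)) A) = 4"
    show "NF (act (addm 3 0 (A$1$3)) A)"
      by (rule SA1_4a[OF sk' rk']) (simp_all add: act_comp[symmetric] act_addm act_scm act_permm sl h sw_def)
  qed
qed

lemma SA1_3a:
  assumes sk: "skew A" and rk: "rank A = 4"
    and h: "A$0$1 = 1" "A$0$2 = 0" "A$1$2 = 0"
  shows "NF A"
proof -
  note sl = skew_low[OF sk]
  have inv: "invertible (addm 3 1 (- A$0$3))" by (simp add: invertible_addm)
  show ?thesis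
  proof (rule stepA[OF inv sk rk])
    assume sk': "skew (act (addm 3 1 (- A$0$3)) A)" and rk': "rank (act (addm 3 1 (- A$0$3)) A) = 4"
    show "NF (act (addm 3 1 (- A$0$3)) A)"
      by (rule SA1_3b[OF sk' rk']) (simp_all add: act_comp[symmetric] act_addm act_scm act_permm sl h sw_def)
  qed
qed

lemma SA1_2b:
  assumes sk: "skew A" and rk: "rank A = 4"
    and h: "A$0$1 = 1" "A$0$2 = 0"
  shows "NF A"
proof -
  note sl = skew_low[OF sk]
  have inv: "invertible (addm 2 0 (A$1$2))" by (simp add: invertible_addm)
  show ?thesis
  proof (rule stepA[OF inv sk rk])
    assume sk': "skew (act (addm 2 0 (A$1$2)) A)" and rk': "rank (act (addm 2 0 (A$1$2)) A) = 4"
    show "NF (act (addm 2 0 (A$1$2)) A)"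
      by (rule SA1_3a[OF sk' rk']) (simp_all add: act_comp[symmetric] act_addm act_scm act_permm sl h sw_def)
  qed
qed

lemma SA1_2a:
  assumes sk: "skew A" and rk: "rank A = 4"
    and h: "A$0$1 = 1"
  shows "NF A"
proof -
  note sl = skew_low[OF sk]
  have inv: "invertible (addm 2 1 (- A$0$2))" by (simp add: invertible_addm)
  show ?thesis
  proof (rule stepA[OF inv sk rk])
    assume sk': "skew (act (addm 2 1 (- A$0$2)) A)" and rk': "rank (act (addm 2 1 (- A$0$2)) A) = 4"
    show "NF (act (addm 2 1 (- A$0$2)) A)"
      by (rule SA1_2b[OF sk' rk']) (simp_all add: act_comp[symmetric] act_addm act_scm act_permm sl h sw_def)
  qed
qed

lemma SA1:
  assumes sk: "skew A" and rk: "rank A = 4"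
    and h: "A$0$1 \<noteq> 0"
  shows "NF A"
proof -
  note sl = skew_low[OF sk]
  have inv: "invertible (scm 0 (1 / A$0$1))" by (simp add: invertible_scm h)
  show ?thesis
  proof (rule stepA[OF inv sk rk])
    assume sk': "skew (act (scm 0 (1 / A$0$1)) A)" and rk': "rank (act (scm 0 (1 / A$0$1)) A) = 4"
    show "NF (act (scm 0 (1 / A$0$1)) A)"
      by (rule SA1_2a[OF sk' rk']) (simp_all add: act_comp[symmetric] act_addm act_scm act_permm sl h sw_def)
  qed
qed

lemma normA:
  assumes sk: "skew A" and rk: "rank A = 4"
  shows "NF A"
proof -
  have "\<exists>i j. A$i$j \<noteq> 0"
  proof (rule ccontr)
    assume "\<not> ?thesis"
    then have z: "\<And>i j. A$i$j = 0" by auto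
    have "\<And>k. row k A \<in> vec.span {0, 0}"
    proof -
      fix k
      have "row k A = 0" by (simp add: vec_eq_iff row_def z)
      then show "row k A \<in> vec.span {0, 0}" by (simp add: vec.span_zero)
    qed
    then have "rank A \<le> 2" by (rule rank_le2)
    then show False using rk by simp
  qed
  then obtain i j where ij: "A$i$j \<noteq> 0" by blast
  have inj: "i \<noteq> j" using ij skew_diag[OF sk] by auto
  define k where "k = sw 0 i j"
  define p where "p = sw 0 i \<circ> sw 1 k"
  have k0: "k \<noteq> 0" using inj unfolding k_def sw_def by auto
  have p0: "p 0 = i" unfolding p_def using k0 by (simp add: sw_def)
  have p1: "p 1 = j" unfolding p_def k_def by (auto simp: sw_def)
  have inv: "invertible (permm p)" unfolding p_def by (rule invertible_permm) (simp add: sw_bij bij_comp)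
  show ?thesis
  proof (rule stepA[OF inv sk rk])
    assume sk': "skew (act (permm p) A)" and rk': "rank (act (permm p) A) = 4"
    show "NF (act (permm p) A)"
      by (rule SA1[OF sk' rk']) (simp add: act_permm p0 p1 ij)
  qed
qed

theorem mainTheorem2:
  fixes A B :: "complex^6^6"
  assumes "skew A" and "skew B"
    and "\<forall>a b. lin2 a A b B = 0 \<longrightarrow> a = 0 \<and> b = 0"
    and "\<forall>a b. (a, b) \<noteq> (0, 0) \<longrightarrow> rank (lin2 a A b B) = 4"
  shows "\<exists>g :: complex^6^6. invertible g \<and>
    (act g ` pline A B = pline (wedge 0 2 + wedge 1 3) (wedge 0 4 + wedge 1 5) \<or>
     act g ` pline A B = pline (wedge 0 2 + wedge 1 3) (wedge 0 4 + wedge 1 2))"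
proof -
  have cr: "CR A B" unfolding CR_def using assms by blast
  have "rank (lin2 1 A 0 B) = 4" using CR_rank[OF cr, of 1 0] by simp
  then have rA: "rank A = 4" by (simp add: lin2_10)
  obtain h where h: "invertible h" "act h A = A0" using normA[OF assms(1) rA] unfolding NF_def by blast
  have "CR A0 (act h B)" using CR_act[OF h(1) cr] h(2) by simp
  then have "GoalP A0 (act h B)" by (rule B0)
  then have "GoalP (act h A) (act h B)" using h(2) by simp
  then have "GoalP A B" by (rule GoalP_act[OF h(1)])
  then show ?thesis unfolding GoalP_def T1_def Tg_def Ts_def .
qed

end
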